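(* Let $X=\mathcal A^{{\mathbb Z^d}}$ be a full $d$-dimensional shift on a finite alphabet $\mathcal A$, $\phi:X\to\mathbb R$ be a continuous function, and $\beta_{\mathrm{c}}\in\mathbb R$. Then, $\phi$ has a freezing phase transition at $\beta_{\mathrm{c}}$ if and only if the pressure function is affine on $[\,\beta_{\mathrm{c}},\infty)$ and not on any larger interval. Moreover, in this case $p_\phi(\beta)=s_\phi \beta+h_\phi$.
   Context: Pressure function $p_\phi(\beta)=\sup_\nu\{h(\nu)+\beta\int\phi\,d\nu\}$ over shift-invariant probability measures $\nu$ ($h$ = measure-theoretic entropy). $s_\phi=\sup_\nu\int\phi\,d\nu$ and $h_\phi=\sup\{h(\eta):\int\phi\,d\eta=s_\phi\}$ (sups over shift-invariant measures). $\mathrm{ES}(\beta\phi)$ is the set of shift-invariant $\mu$ with $h(\mu)+\beta\int\phi\,d\mu=p_\phi(\beta)$. $\phi$ has a freezing phase transition at $\beta_c$ if $\mathrm{ES}(\beta\phi)=\mathrm{ES}(\beta'\phi)$ for all $\beta,\beta'>\beta_c$ while $\mathrm{ES}(\beta\phi)\ne\mathrm{ES}(\beta'\phi)$ for any $\beta<\beta_c<\beta'$. *)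

theory Defs
  imports "HOL-Probability.Probability"
begin

text \<open>Full shift X = A^(Z^d): sites are 'd \<Rightarrow> int with 'd a finite index type
  (d = CARD('d)), configurations are functions from sites to the finite alphabet 'a.\<close>

type_synonym ('d, 'a) config = "('d \<Rightarrow> int) \<Rightarrow> 'a"

definition shift_topology :: "('d, 'a) config topology" where
  "shift_topology = product_topology (\<lambda>_. discrete_topology UNIV) UNIV"

text \<open>Borel (= product) sigma-algebra on X.\<close>
definition shift_space :: "('d, 'a) config measure" where
  "shift_space = PiM UNIV (\<lambda>_. count_space UNIV)"

definition shift_map :: "('d \<Rightarrow> int) \<Rightarrow> ('d, 'a) config \<Rightarrow> ('d, 'a) config" where
  "shift_map v x = (\<lambda>n. x (\<lambda>k. n k + v k))"

definition invariant_measures :: "('d, 'a) config measure set" where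
  "invariant_measures = {\<nu>. sets \<nu> = sets shift_space \<and> prob_space \<nu> \<and>
      (\<forall>v. distr \<nu> shift_space (shift_map v) = \<nu>)}"

definition box :: "nat \<Rightarrow> ('d \<Rightarrow> int) set" where
  "box n = {i. \<forall>k. 0 \<le> i k \<and> i k < int n}"

definition cylinder :: "('d \<Rightarrow> int) set \<Rightarrow> (('d \<Rightarrow> int) \<Rightarrow> 'a) \<Rightarrow> ('d, 'a) config set" where
  "cylinder \<Lambda> w = {x. \<forall>i\<in>\<Lambda>. x i = w i}"

definition eta :: "real \<Rightarrow> real" where
  "eta t = (if t = 0 then 0 else - t * ln t)"

definition block_entropy :: "('d::finite, 'a::finite) config measure \<Rightarrow> nat \<Rightarrow> real" where
  "block_entropy \<nu> n = (\<Sum>w \<in> PiE (box n) (\<lambda>_. UNIV). eta (measure \<nu> (cylinder (box n) w)))"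

text \<open>Measure-theoretic (Kolmogorov-Sinai) entropy of a shift-invariant measure on the
  full Z^d shift (the cylinder partition is generating).\<close>
definition ms_entropy :: "('d::finite, 'a::finite) config measure \<Rightarrow> real" where
  "ms_entropy \<nu> = lim (\<lambda>n. block_entropy \<nu> n / real (n ^ CARD('d)))"

definition pressure :: "(('d::finite, 'a::finite) config \<Rightarrow> real) \<Rightarrow> real \<Rightarrow> real" where
  "pressure \<phi> \<beta> = (SUP \<nu>\<in>invariant_measures. ms_entropy \<nu> + \<beta> * integral\<^sup>L \<nu> \<phi>)"

definition s_phi :: "(('d::finite, 'a::finite) config \<Rightarrow> real) \<Rightarrow> real" where
  "s_phi \<phi> = (SUP \<nu>\<in>invariant_measures. integral\<^sup>L \<nu> \<phi>)"

definition h_phi :: "(('d::finite, 'a::finite) config \<Rightarrow> real) \<Rightarrow> real" where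
  "h_phi \<phi> = (SUP \<eta>\<in>{\<eta>\<in>invariant_measures. integral\<^sup>L \<eta> \<phi> = s_phi \<phi>}. ms_entropy \<eta>)"

definition equilibrium_states ::
  "(('d::finite, 'a::finite) config \<Rightarrow> real) \<Rightarrow> real \<Rightarrow> ('d, 'a) config measure set" where
  "equilibrium_states \<phi> \<beta> = {\<mu>\<in>invariant_measures.
      ms_entropy \<mu> + \<beta> * integral\<^sup>L \<mu> \<phi> = pressure \<phi> \<beta>}"

definition freezing_phase_transition ::
  "(('d::finite, 'a::finite) config \<Rightarrow> real) \<Rightarrow> real \<Rightarrow> bool" where
  "freezing_phase_transition \<phi> \<beta>c \<longleftrightarrow>
     (\<forall>\<beta> \<beta>'. \<beta> > \<beta>c \<and> \<beta>' > \<beta>c \<longrightarrow> equilibrium_states \<phi> \<beta> = equilibrium_states \<phi> \<beta>') \<and>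
     (\<forall>\<beta> \<beta>'. \<beta> < \<beta>c \<and> \<beta>c < \<beta>' \<longrightarrow> equilibrium_states \<phi> \<beta> \<noteq> equilibrium_states \<phi> \<beta>')"

definition affine_on :: "(real \<Rightarrow> real) \<Rightarrow> real set \<Rightarrow> bool" where
  "affine_on f I \<longleftrightarrow> (\<exists>a b. \<forall>x\<in>I. f x = a * x + b)"

end

theory Submission
  imports Defs "HOL-Library.Diagonal_Subsequence" "HOL-Real_Asymp.Real_Asymp"
begin

definition words :: "('d \<Rightarrow> int) set \<Rightarrow> (('d \<Rightarrow> int) \<Rightarrow> 'a) set" where
  "words J = PiE J (\<lambda>_. UNIV)"

lemma space_shift_space[simp]: "space shift_space = UNIV"
  by (simp add: shift_space_def space_PiM)

lemma cylinder_sets[measurable]: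
  assumes "finite J" shows "cylinder J w \<in> sets shift_space"
proof -
  have "cylinder J w = (\<Inter>i\<in>J. {x\<in>space shift_space. x i = w i}) \<inter> space shift_space"
    by (auto simp: cylinder_def)
  also have "\<dots> \<in> sets shift_space"
    using assms unfolding shift_space_def by measurable
  finally show ?thesis .
qed

lemma finite_words[simp]: "finite J \<Longrightarrow> finite (words J :: (('d \<Rightarrow> int) \<Rightarrow> 'a::finite) set)"
  unfolding words_def by (intro finite_PiE) auto

lemma restrict_in_words[simp]: "restrict x J \<in> words J"
  by (simp add: words_def)

lemma cylinder_restrict: "x \<in> cylinder J (restrict x J)"
  by (simp add: cylinder_def)

lemma cylinder_eq_vimage: "w \<in> words J \<Longrightarrow> cylinder J w = {x. restrict x J = w}"
  by (auto simp: cylinder_def words_def restrict_def fun_eq_iff PiE_def extensional_def)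

lemma cylinder_disj: "w \<in> words J \<Longrightarrow> w' \<in> words J \<Longrightarrow> w \<noteq> w' \<Longrightarrow> cylinder J w \<inter> cylinder J w' = {}"
  by (auto simp: cylinder_eq_vimage)

lemma cylinder_cong: "(\<And>i. i \<in> J \<Longrightarrow> w i = w' i) \<Longrightarrow> cylinder J w = cylinder J w'"
  by (auto simp: cylinder_def)

lemma cylinder_empty[simp]: "cylinder {} w = UNIV"
  by (simp add: cylinder_def)

lemma words_empty: "words {} = {\<lambda>_. undefined}"
  by (simp add: words_def)

lemma cylinder_split:
  assumes "J \<subseteq> H" "w \<in> words J"
  shows "cylinder J w = (\<Union>v\<in>{v\<in>words H. restrict v J = w}. cylinder H v)"
proof safe
  fix x assume x: "x \<in> cylinder J w"
  have "restrict (restrict x H) J = restrict x J" using assms(1) by (auto simp: restrict_def fun_eq_iff)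
  moreover have "restrict x J = w" using x assms(2) by (simp add: cylinder_eq_vimage)
  ultimately have "restrict x H \<in> {v\<in>words H. restrict v J = w}"
    by simp
  then show "x \<in> (\<Union>v\<in>{v\<in>words H. restrict v J = w}. cylinder H v)"
    using cylinder_restrict by blast
next
  fix x v assume "v \<in> words H" "x \<in> cylinder H v" "w = restrict v J"
  then show "x \<in> cylinder J (restrict v J)"
    using assms by (auto simp: cylinder_def)
qed

definition pm :: "('d, 'a) config measure \<Rightarrow> bool" where
  "pm \<mu> \<longleftrightarrow> prob_space \<mu> \<and> sets \<mu> = sets shift_space"

lemma pm_space: "pm \<mu> \<Longrightarrow> space \<mu> = UNIV"
  unfolding pm_def by (metis sets_eq_imp_space_eq space_shift_space)

lemma pm_cyl_sets: "pm \<mu> \<Longrightarrow> finite J \<Longrightarrow> cylinder J w \<in> sets \<mu>"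
  unfolding pm_def by simp

lemma measure_cylinder_split:
  fixes \<mu> :: "('d, 'a::finite) config measure"
  assumes "pm \<mu>" "J \<subseteq> H" "finite H" "w \<in> words J"
  shows "measure \<mu> (cylinder J w) = (\<Sum>v\<in>{v\<in>words H. restrict v J = w}. measure \<mu> (cylinder H v))"
proof -
  interpret prob_space \<mu> using assms(1) by (simp add: pm_def)
  have "measure \<mu> (cylinder J w) = measure \<mu> (\<Union>v\<in>{v\<in>words H. restrict v J = w}. cylinder H v)"
    using cylinder_split[OF assms(2,4)] by simp
  also have "\<dots> = (\<Sum>v\<in>{v\<in>words H. restrict v J = w}. measure \<mu> (cylinder H v))"
    apply (rule measure_finite_Union)
    using assms pm_cyl_sets[OF assms(1)] 
    apply (auto simp: disjoint_family_on_def)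
    by (metis IntI cylinder_disj empty_iff)
  finally show ?thesis .
qed

lemma measure_cylinder_sum:
  fixes \<mu> :: "('d, 'a::finite) config measure"
  assumes "pm \<mu>" "finite H"
  shows "(\<Sum>v\<in>words H. measure \<mu> (cylinder H v)) = 1"
proof -
  interpret prob_space \<mu> using assms(1) by (simp add: pm_def)
  have "1 = measure \<mu> (cylinder {} (\<lambda>_. undefined))"
    by (metis prob_space pm_space[OF assms(1)] cylinder_empty)
  also have "\<dots> = (\<Sum>v\<in>{v\<in>words H. restrict v {} = (\<lambda>_. undefined)}. measure \<mu> (cylinder H v))"
    by (rule measure_cylinder_split) (use assms in \<open>auto simp: words_empty\<close>)
  also have "{v\<in>words H. restrict v {} = (\<lambda>_. undefined)} = words H"
    by (auto simp: restrict_def)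
  finally show ?thesis by simp
qed

lemma invariant_pm: "\<mu> \<in> invariant_measures \<Longrightarrow> pm \<mu>"
  by (simp add: invariant_measures_def pm_def)

definition trs :: "('d \<Rightarrow> int) \<Rightarrow> ('d \<Rightarrow> int) set \<Rightarrow> ('d \<Rightarrow> int) set" where
  "trs v J = (\<lambda>i k. i k + v k) ` J"

definition trw :: "('d \<Rightarrow> int) \<Rightarrow> (('d \<Rightarrow> int) \<Rightarrow> 'a) \<Rightarrow> (('d \<Rightarrow> int) \<Rightarrow> 'a)" where
  "trw v w = (\<lambda>j. w (\<lambda>k. j k - v k))"

lemma shift_map_measurable[measurable]: "shift_map v \<in> measurable shift_space shift_space"
  unfolding shift_space_def shift_map_def
  by (rule measurable_PiM_single') (auto simp: space_PiM)

lemma shift_vimage_cylinder: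
  "shift_map v -` cylinder J w = cylinder (trs v J) (trw v w)"
  by (auto simp: shift_map_def cylinder_def trs_def trw_def)

lemma finite_trs[simp]: "finite J \<Longrightarrow> finite (trs v J)"
  by (simp add: trs_def)

lemma inv_measure_cylinder:
  assumes "\<mu> \<in> invariant_measures" "finite J"
  shows "measure \<mu> (cylinder (trs v J) (trw v w)) = measure \<mu> (cylinder J w)"
proof -
  have pm: "pm \<mu>" using assms(1) by (rule invariant_pm)
  have "distr \<mu> shift_space (shift_map v) = \<mu>" using assms by (simp add: invariant_measures_def)
  then have "measure \<mu> (cylinder J w) = measure (distr \<mu> shift_space (shift_map v)) (cylinder J w)"
    by simp
  also have "\<dots> = measure \<mu> (shift_map v -` cylinder J w \<inter> space \<mu>)"
    apply (rule measure_distr)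
    using pm assms(2) by (auto simp: pm_def)
  also have "\<dots> = measure \<mu> (cylinder (trs v J) (trw v w))"
    using pm_space[OF pm] by (simp add: shift_vimage_cylinder)
  finally show ?thesis ..
qed

definition Hent :: "('d, 'a) config measure \<Rightarrow> ('d \<Rightarrow> int) set \<Rightarrow> real" where
  "Hent \<mu> J = (\<Sum>w\<in>words J. eta (measure \<mu> (cylinder J w)))"

lemma block_entropy_Hent: "block_entropy \<mu> n = Hent \<mu> (box n)"
  by (simp add: block_entropy_def Hent_def words_def)


lemma Hent_trs:
  fixes \<mu> :: "('d, 'a::finite) config measure"
  assumes "\<mu> \<in> invariant_measures" "finite J"
  shows "Hent \<mu> (trs v J) = Hent \<mu> J"
proof -
  let ?i = "\<lambda>u. restrict (\<lambda>i. u (\<lambda>k. i k + v k)) J"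
  let ?j = "\<lambda>w. restrict (trw v w) (trs v J)"
  have 1: "?j (?i u) = u" if u: "u \<in> words (trs v J)" for u
  proof
    fix x show "?j (?i u) x = u x"
    proof (cases "x \<in> trs v J")
      case True
      then obtain i0 where i0: "i0 \<in> J" "x = (\<lambda>k. i0 k + v k)" by (auto simp: trs_def)
      have e: "(\<lambda>k. x k - v k) = i0" using i0 by auto
      show ?thesis using True i0 e by (simp add: trw_def)
    next
      case False
      then show ?thesis using u by (simp add: words_def PiE_def extensional_def)
    qed
  qed
  have 2: "?i (?j w) = w" if w: "w \<in> words J" for w
  proof
    fix x show "?i (?j w) x = w x"
    proof (cases "x \<in> J")
      case True
      have e: "(\<lambda>k. x k + v k) \<in> trs v J" using True by (auto simp: trs_def)
      have e2: "(\<lambda>k. (x k + v k) - v k) = x" by simp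
      show ?thesis using True e e2 by (simp add: trw_def)
    next
      case False
      then show ?thesis using w by (simp add: words_def PiE_def extensional_def)
    qed
  qed
  have 3: "eta (measure \<mu> (cylinder (trs v J) (?j w))) = eta (measure \<mu> (cylinder J w))" for w
  proof -
    have "cylinder (trs v J) (restrict (trw v w) (trs v J)) = cylinder (trs v J) (trw v w)"
      by (rule cylinder_cong) simp
    then show ?thesis using inv_measure_cylinder[OF assms] by simp
  qed
  have "Hent \<mu> J = Hent \<mu> (trs v J)"
    unfolding Hent_def
    by (rule sum.reindex_bij_witness[where j="?j" and i="?i"]) (use 1 2 3 in auto)
  then show ?thesis ..
qed

lemma pm_info: "pm \<mu> \<Longrightarrow> information_space \<mu> (exp 1)"
  unfolding information_space_def information_space_axioms_def pm_def by simp

lemma img_restrict: "(\<lambda>x::('d, 'a) config. restrict x J) ` UNIV = words J"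
proof (intro equalityI subsetI)
  fix w assume "w \<in> words J"
  then have "w = restrict w J" by (simp add: words_def)
  then show "w \<in> range (\<lambda>x. restrict x J)" by blast
qed auto

lemma Hent_entropy:
  fixes \<mu> :: "('d, 'a::finite) config measure"
  assumes "pm \<mu>" "finite J"
  shows "simple_function \<mu> (\<lambda>x. restrict x J)"
    and "Hent \<mu> J = prob_space.entropy \<mu> (exp 1) (count_space ((\<lambda>x. restrict x J) ` space \<mu>)) (\<lambda>x. restrict x J)"
proof -
  interpret information_space \<mu> "exp 1"
    using pm_info[OF assms(1)] .
  have sp: "space \<mu> = UNIV" by (rule pm_space[OF assms(1)])
  have img: "(\<lambda>x. restrict x J) ` space \<mu> = words J"
    unfolding sp img_restrict ..
  have vim: "(\<lambda>x. restrict x J) -` {w} \<inter> space \<mu> = cylinder J w" if "w \<in> words J" for w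
    using that sp by (auto simp: cylinder_eq_vimage)
  show sf: "simple_function \<mu> (\<lambda>x. restrict x J)"
    unfolding simple_function_def img using vim pm_cyl_sets[OF assms] assms(2) by auto
  have "entropy (exp 1) (count_space ((\<lambda>x. restrict x J) ` space \<mu>)) (\<lambda>x. restrict x J) =
    - (\<Sum>x\<in>(\<lambda>x. restrict x J) ` space \<mu>. measure \<mu> ((\<lambda>x. restrict x J) -` {x} \<inter> space \<mu>) *
         log (exp 1) (measure \<mu> ((\<lambda>x. restrict x J) -` {x} \<inter> space \<mu>)))"
    by (rule entropy_simple_distributed[OF simple_distributedI[OF sf measure_nonneg refl]])
  also have "\<dots> = (\<Sum>w\<in>words J. eta (measure \<mu> (cylinder J w)))"
    unfolding img sum_negf[symmetric]
    by (intro sum.cong refl) (auto simp: vim eta_def log_def)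
  finally show "Hent \<mu> J = entropy (exp 1) (count_space ((\<lambda>x. restrict x J) ` space \<mu>)) (\<lambda>x. restrict x J)"
    by (simp add: Hent_def)
qed


lemma eta_nonneg: "0 \<le> t \<Longrightarrow> t \<le> 1 \<Longrightarrow> 0 \<le> eta t"
  unfolding eta_def using ln_le_zero_iff[of t]
  by (auto simp: mult_nonneg_nonpos)

lemma Hent_nonneg:
  assumes "pm \<mu>" shows "0 \<le> Hent \<mu> J"
proof -
  interpret prob_space \<mu> using assms by (simp add: pm_def)
  show ?thesis unfolding Hent_def by (intro sum_nonneg eta_nonneg) auto
qed

lemma card_words: "finite J \<Longrightarrow> card (words J :: (('d \<Rightarrow> int) \<Rightarrow> 'a::finite) set) = CARD('a) ^ card J"
  by (simp add: words_def card_PiE)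

lemma Hent_le_card:
  fixes \<mu> :: "('d, 'a::finite) config measure"
  assumes "pm \<mu>" "finite J"
  shows "Hent \<mu> J \<le> real (card J) * ln (real CARD('a))"
proof -
  interpret information_space \<mu> "exp 1"
    using pm_info[OF assms(1)] .
  note sf = Hent_entropy(1)[OF assms]
  have img: "(\<lambda>x. restrict x J) ` space \<mu> = words J"
    unfolding pm_space[OF assms(1)] img_restrict ..
  have "Hent \<mu> J \<le> log (exp 1) (real (card ((\<lambda>x. restrict x J) ` space \<mu>)))"
    unfolding Hent_entropy(2)[OF assms]
    by (rule entropy_le_card[OF simple_distributedI[OF sf measure_nonneg refl]])
  also have "\<dots> = real (card J) * ln (real CARD('a))"
    unfolding img card_words[OF assms(2)] by (simp add: log_def ln_realpow)
  finally show ?thesis .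
qed

lemma Hent_mono:
  fixes \<mu> :: "('d, 'a::finite) config measure"
  assumes "pm \<mu>" "J \<subseteq> H" "finite H"
  shows "Hent \<mu> J \<le> Hent \<mu> H"
proof -
  interpret information_space \<mu> "exp 1"
    using pm_info[OF assms(1)] .
  have fJ: "finite J" using assms finite_subset by auto
  have eq: "(\<lambda>w. restrict w J) \<circ> (\<lambda>x. restrict x H) = (\<lambda>x. restrict x J)"
    using assms(2) by (auto simp: fun_eq_iff restrict_def)
  have "entropy (exp 1) (count_space (((\<lambda>w. restrict w J) \<circ> (\<lambda>x. restrict x H)) ` space \<mu>))
      ((\<lambda>w. restrict w J) \<circ> (\<lambda>x. restrict x H)) \<le>
    entropy (exp 1) (count_space ((\<lambda>x. restrict x H) ` space \<mu>)) (\<lambda>x. restrict x H)"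
    by (rule entropy_data_processing[OF Hent_entropy(1)[OF assms(1,3)]])
  then show ?thesis
    unfolding eq Hent_entropy(2)[OF assms(1,3)] Hent_entropy(2)[OF assms(1) fJ] .
qed

lemma Hent_Un:
  fixes \<mu> :: "('d, 'a::finite) config measure"
  assumes "pm \<mu>" "finite J" "finite H"
  shows "Hent \<mu> (J \<union> H) \<le> Hent \<mu> J + Hent \<mu> H"
proof -
  interpret information_space \<mu> "exp 1"
    using pm_info[OF assms(1)] .
  have fJH: "finite (J \<union> H)" using assms by auto
  let ?g = "\<lambda>w. (restrict w J, restrict w H)"
  let ?X = "\<lambda>x. restrict x (J \<union> H)"
  have eq: "?g \<circ> ?X = (\<lambda>x. (restrict x J, restrict x H))"
    by (auto simp: fun_eq_iff restrict_def)
  have inj: "inj_on ?g (words (J \<union> H))"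
  proof (rule inj_onI)
    fix w w' assume w: "w \<in> words (J \<union> H)" "w' \<in> words (J \<union> H)" and e: "?g w = ?g w'"
    show "w = w'"
    proof
      fix x
      from e have e1: "restrict w J x = restrict w' J x" and e2: "restrict w H x = restrict w' H x"
        by simp_all
      show "w x = w' x"
      proof (cases "x \<in> J \<union> H")
        case True
        then show ?thesis using e1 e2 by (cases "x \<in> J") simp_all
      next
        case False
        then show ?thesis using w by (simp add: words_def PiE_def extensional_def)
      qed
    qed
  qed
  then have inj: "inj_on ?g (?X ` space \<mu>)"
    unfolding pm_space[OF assms(1)] img_restrict .
  have sJ: "simple_function \<mu> (\<lambda>x. restrict x J)" and sH: "simple_function \<mu> (\<lambda>x. restrict x H)"
    using Hent_entropy(1) assms by auto
  have "Hent \<mu> (J \<union> H) = entropy (exp 1) (count_space ((?g \<circ> ?X) ` space \<mu>)) (?g \<circ> ?X)"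
    unfolding Hent_entropy(2)[OF assms(1) fJH]
    by (rule entropy_of_inj[OF Hent_entropy(1)[OF assms(1) fJH] inj, symmetric])
  also have "\<dots> = entropy (exp 1) (count_space ((\<lambda>x. (restrict x J, restrict x H)) ` space \<mu>)) (\<lambda>x. (restrict x J, restrict x H))"
    unfolding eq ..
  also have "\<dots> = Hent \<mu> J + conditional_entropy (exp 1) (count_space ((\<lambda>x. restrict x H) ` space \<mu>)) (count_space ((\<lambda>x. restrict x J) ` space \<mu>)) (\<lambda>x. restrict x H) (\<lambda>x. restrict x J)"
    unfolding Hent_entropy(2)[OF assms(1,2)]
    by (rule entropy_chain_rule[OF sJ sH])
  also have "\<dots> \<le> Hent \<mu> J + Hent \<mu> H"
    unfolding Hent_entropy(2)[OF assms(1,3)]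
    using conditional_entropy_less_eq_entropy[OF sH sJ] by simp
  finally show ?thesis .
qed

lemma Hent_empty: "pm (\<mu>::('d, 'a::finite) config measure) \<Longrightarrow> Hent \<mu> {} = 0"
  using Hent_nonneg[of \<mu> "{}"] Hent_le_card[of \<mu> "{}"] by simp

lemma Hent_UN:
  fixes \<mu> :: "('d, 'a::finite) config measure"
  assumes "pm \<mu>" "finite I" "\<And>j. j \<in> I \<Longrightarrow> finite (S j)"
  shows "Hent \<mu> (\<Union>j\<in>I. S j) \<le> (\<Sum>j\<in>I. Hent \<mu> (S j))"
  using assms(2,3)
proof (induction I rule: finite_induct)
  case empty
  then show ?case using Hent_empty[OF assms(1)] by simp
next
  case (insert x F)
  have "Hent \<mu> (\<Union>j\<in>insert x F. S j) = Hent \<mu> (S x \<union> (\<Union>j\<in>F. S j))" by simp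
  also have "\<dots> \<le> Hent \<mu> (S x) + Hent \<mu> (\<Union>j\<in>F. S j)"
    by (rule Hent_Un[OF assms(1)]) (use insert in auto)
  also have "\<dots> \<le> Hent \<mu> (S x) + (\<Sum>j\<in>F. Hent \<mu> (S j))"
    using insert by simp
  finally show ?case using insert by simp
qed

lemma int_div_less_aux: "0 < (m::int) \<Longrightarrow> x < q * m \<Longrightarrow> x div m < q"
  by (smt (verit, best) of_int_less_iff of_int_mult of_int_pos pos_divide_less_eq real_of_int_div4)

lemma box_PiE: "box n = PiE UNIV (\<lambda>_. {0..<int n})"
  unfolding PiE_UNIV_domain box_def Pi_def by auto

lemma finite_box[simp]: "finite (box n :: ('d::finite \<Rightarrow> int) set)"
  unfolding box_PiE by (intro finite_PiE) auto

lemma card_box: "card (box n :: ('d::finite \<Rightarrow> int) set) = n ^ CARD('d)"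
  unfolding box_PiE by (simp add: card_PiE)

lemma box_mono: "m \<le> n \<Longrightarrow> box m \<subseteq> box n"
  unfolding box_def by (smt (verit, best) Collect_mono of_nat_mono)

lemma box_mult:
  assumes "0 < m"
  shows "box (q * m) = (\<Union>j\<in>box q. trs (\<lambda>k. int m * j k) (box m))"
proof (intro equalityI subsetI)
  fix i :: "'d \<Rightarrow> int" assume i: "i \<in> box (q * m)"
  define j where "j = (\<lambda>k. i k div int m)"
  define r where "r = (\<lambda>k. i k mod int m)"
  have "j \<in> box q"
    unfolding box_def j_def
  proof safe
    fix k
    have "0 \<le> i k" "i k < int q * int m" using i by (auto simp: box_def)
    then show "0 \<le> i k div int m"
      using assms by (simp add: pos_imp_zdiv_nonneg_iff)
    show "i k div int m < int q"
      using assms \<open>i k < int q * int m\<close> int_div_less_aux[of "int m" "i k" "int q"] by simp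
  qed
  moreover have "r \<in> box m"
    unfolding box_def r_def using assms by auto
  moreover have "i = (\<lambda>k. r k + int m * j k)"
    by (auto simp: r_def j_def fun_eq_iff)
  ultimately show "i \<in> (\<Union>j\<in>box q. trs (\<lambda>k. int m * j k) (box m))"
    unfolding trs_def by blast
next
  fix i :: "'d \<Rightarrow> int" assume "i \<in> (\<Union>j\<in>box q. trs (\<lambda>k. int m * j k) (box m))"
  then obtain j r where j: "j \<in> box q" and r: "r \<in> box m" and i: "i = (\<lambda>k. r k + int m * j k)"
    unfolding trs_def by blast
  show "i \<in> box (q * m)"
    unfolding box_def
  proof safe
    fix k
    have "0 \<le> r k" "r k < int m" "0 \<le> j k" "j k + 1 \<le> int q"
      using j r unfolding box_def by (auto, smt (verit) mem_Collect_eq)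
    moreover have "int m * (j k + 1) \<le> int m * int q"
      using calculation by (intro mult_left_mono) auto
    ultimately show "0 \<le> i k" "i k < int (q * m)"
      unfolding i by (auto simp: algebra_simps)
  qed
qed

lemma Hent_box_mult:
  fixes \<mu> :: "('d::finite, 'a::finite) config measure"
  assumes "\<mu> \<in> invariant_measures" "0 < m"
  shows "Hent \<mu> (box (q * m)) \<le> real q ^ CARD('d) * Hent \<mu> (box m)"
proof -
  have pm: "pm \<mu>" using assms(1) by (rule invariant_pm)
  have "Hent \<mu> (box (q * m)) \<le> (\<Sum>j\<in>box q. Hent \<mu> (trs (\<lambda>k. int m * j k) (box m)))"
    unfolding box_mult[OF assms(2)] by (rule Hent_UN[OF pm]) auto
  also have "\<dots> = (\<Sum>j\<in>(box q :: ('d \<Rightarrow> int) set). Hent \<mu> (box m))"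
    using Hent_trs[OF assms(1)] by simp
  also have "\<dots> = real q ^ CARD('d) * Hent \<mu> (box m)"
    by (simp add: card_box)
  finally show ?thesis .
qed

definition ent_seq :: "('d::finite, 'a::finite) config measure \<Rightarrow> nat \<Rightarrow> real" where
  "ent_seq \<mu> n = Hent \<mu> (box n) / real n ^ CARD('d)"

lemma ms_entropy_ent_seq: "ms_entropy \<mu> = lim (ent_seq \<mu>)"
  unfolding ms_entropy_def ent_seq_def block_entropy_Hent of_nat_power ..

lemma ent_seq_nonneg: assumes "pm \<mu>" shows "0 \<le> ent_seq \<mu> n"
  unfolding ent_seq_def using Hent_nonneg[OF assms, of "box n"] by simp

lemma ent_seq_le:
  fixes \<mu> :: "('d::finite, 'a::finite) config measure"
  assumes "pm \<mu>" "0 < n"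
  shows "ent_seq \<mu> n \<le> ln (real CARD('a))"
proof -
  have "Hent \<mu> (box n) \<le> real n ^ CARD('d) * ln (real CARD('a))"
    using Hent_le_card[OF assms(1) finite_box, of n] by (simp add: card_box)
  then show ?thesis unfolding ent_seq_def using assms(2)
    by (simp add: divide_le_eq mult.commute)
qed

lemma Hent_box_bound:
  fixes \<mu> :: "('d::finite, 'a::finite) config measure"
  assumes inv: "\<mu> \<in> invariant_measures" and m: "0 < m" "q * m \<le> n"
  shows "Hent \<mu> (box n) \<le> real q ^ CARD('d) * Hent \<mu> (box m) +
            (real n ^ CARD('d) - real (q * m) ^ CARD('d)) * ln (real CARD('a))"
proof -
  have pm: "pm \<mu>" using inv by (rule invariant_pm)
  have sub: "box (q * m) \<subseteq> (box n :: ('d \<Rightarrow> int) set)" using m by (intro box_mono)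
  have "box n = box (q * m) \<union> (box n - box (q * m) :: ('d \<Rightarrow> int) set)" using sub by auto
  then have "Hent \<mu> (box n) \<le> Hent \<mu> (box (q * m)) + Hent \<mu> (box n - box (q * m))"
    using Hent_Un[OF pm, of "box (q * m)" "box n - box (q * m)"] by simp
  also have "Hent \<mu> (box (q * m)) \<le> real q ^ CARD('d) * Hent \<mu> (box m)"
    by (rule Hent_box_mult[OF inv m(1)])
  also have "Hent \<mu> (box n - box (q * m)) \<le> real (card (box n - box (q * m) :: ('d \<Rightarrow> int) set)) * ln (real CARD('a))"
    by (rule Hent_le_card[OF pm]) simp
  also have "card (box n - box (q * m) :: ('d \<Rightarrow> int) set) = n ^ CARD('d) - (q * m) ^ CARD('d)"
    using sub by (simp add: card_Diff_subset card_box)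
  also have "real (n ^ CARD('d) - (q * m) ^ CARD('d)) = real n ^ CARD('d) - real (q * m) ^ CARD('d)"
    using m(2) by (simp add: of_nat_diff power_mono)
  finally show ?thesis by simp
qed

lemma ln_card_nonneg: "0 \<le> ln (real CARD('a::finite))"
  by simp

lemma fekete_bound:
  fixes \<mu> :: "('d::finite, 'a::finite) config measure"
  assumes inv: "\<mu> \<in> invariant_measures" and m: "0 < m" "m \<le> n"
  shows "ent_seq \<mu> n \<le> ent_seq \<mu> m + (1 - (1 - real m / real n) ^ CARD('d)) * ln (real CARD('a))"
proof -
  have pm: "pm \<mu>" using inv by (rule invariant_pm)
  define q where "q = n div m"
  define D where "D = CARD('d)"
  define c where "c = ln (real CARD('a))"
  define N where "N = real n"
  define M where "M = real m"
  define Q where "Q = real q"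
  define am where "am = ent_seq \<mu> m"
  have c0: "0 \<le> c" unfolding c_def by simp
  have N0: "0 < N" using m unfolding N_def by simp
  have M0: "0 < M" using m unfolding M_def by simp
  have qm: "q * m \<le> n" unfolding q_def by (simp add: div_times_less_eq_dividend)
  have qm2: "n < q * m + m" unfolding q_def using m(1)
    by (metis add.commute add_less_cancel_right mod_less_divisor mod_mult_div_eq mult.commute)
  have QM1: "Q * M \<le> N" using qm unfolding Q_def M_def N_def by (metis of_nat_le_iff of_nat_mult)
  have QM2: "N - M \<le> Q * M" using qm2 unfolding Q_def M_def N_def
    by (metis add_diff_cancel_right' diff_le_eq less_imp_le of_nat_add of_nat_less_iff of_nat_mult)
  have am0: "0 \<le> am" unfolding am_def by (rule ent_seq_nonneg[OF pm])
  have amc: "am \<le> c" unfolding am_def c_def by (rule ent_seq_le[OF pm m(1)])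
  have Hm: "Hent \<mu> (box m) = M ^ D * am"
    unfolding am_def ent_seq_def M_def D_def using m by simp
  define t where "t = (Q * M / N) ^ D"
  have t0: "0 \<le> t" unfolding t_def using N0 M0 Q_def by simp
  have t1: "t \<le> 1" unfolding t_def using QM1 N0 M0 Q_def
    by (intro power_le_one) (auto simp: divide_le_eq)
  have t2: "(1 - M / N) ^ D \<le> t" unfolding t_def
  proof (rule power_mono)
    have "1 - M / N = (N - M) / N" using N0 by (simp add: field_simps)
    then show "1 - M / N \<le> Q * M / N" using QM2 N0 by (simp add: divide_right_mono)
    show "0 \<le> 1 - M / N" using m N0 M0 unfolding M_def N_def by (simp add: field_simps)
  qed
  have "Hent \<mu> (box n) \<le> Q ^ D * (M ^ D * am) + (N ^ D - (Q * M) ^ D) * c"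
    using Hent_box_bound[OF inv m(1) qm] unfolding Hm Q_def M_def N_def D_def c_def
    by (simp add: Hm[unfolded M_def D_def])
  then have "ent_seq \<mu> n \<le> (Q ^ D * (M ^ D * am) + (N ^ D - (Q * M) ^ D) * c) / N ^ D"
    unfolding ent_seq_def N_def D_def using N0 N_def
    by (simp add: divide_right_mono)
  also have "\<dots> = t * am + (1 - t) * c"
    unfolding t_def using N0 by (simp add: field_simps power_mult_distrib power_divide)
  also have "\<dots> \<le> am + (1 - (1 - M / N) ^ D) * c"
  proof -
    have "t * am \<le> am" using mult_right_mono[OF t1 am0] by simp
    moreover have "(1 - t) * c \<le> (1 - (1 - M / N) ^ D) * c" using t2 c0 by (intro mult_right_mono) auto
    ultimately show ?thesis by simp
  qed
  finally show ?thesis unfolding am_def M_def N_def D_def c_def .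
qed

lemma ent_seq_bdd:
  assumes "pm \<mu>" shows "bdd_below (ent_seq \<mu> ` A)"
  by (rule bdd_belowI2[where m=0]) (rule ent_seq_nonneg[OF assms])

lemma ent_seq_tendsto:
  fixes \<mu> :: "('d::finite, 'a::finite) config measure"
  assumes inv: "\<mu> \<in> invariant_measures"
  shows "ent_seq \<mu> \<longlonglongrightarrow> (INF m\<in>{1..}. ent_seq \<mu> m)"
proof -
  have pm: "pm \<mu>" using inv by (rule invariant_pm)
  let ?L = "INF m\<in>{1..}. ent_seq \<mu> m"
  note bdd = ent_seq_bdd[OF pm, of "{1..}"]
  have low: "?L \<le> ent_seq \<mu> n" if "1 \<le> n" for n
    by (rule cINF_lower[OF bdd]) (use that in simp)
  show ?thesis
  proof (rule order_tendstoI)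
    fix y assume y: "y < ?L"
    show "eventually (\<lambda>n. y < ent_seq \<mu> n) sequentially"
      unfolding eventually_sequentially
      by (intro exI[of _ 1] allI impI) (use y low in fastforce)
  next
    fix y assume y: "?L < y"
    then have "?L < ?L + (y - ?L) / 2" by simp
    then obtain m where m: "m \<in> {1..}" "ent_seq \<mu> m < ?L + (y - ?L) / 2"
      using cINF_less_iff[OF _ bdd] by blast
    have "(\<lambda>n. real m * (1 / real n)) \<longlonglongrightarrow> 0"
      by (rule tendsto_mult_right_zero[OF lim_inverse_n'])
    then have lim0: "(\<lambda>n. real m / real n) \<longlonglongrightarrow> 0" by simp
    have "(\<lambda>n. (1 - (1 - real m / real n) ^ CARD('d)) * ln (real CARD('a))) \<longlonglongrightarrow>
        (1 - (1 - 0) ^ CARD('d)) * ln (real CARD('a))"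
      by (intro tendsto_intros lim0)
    then have lim: "(\<lambda>n. (1 - (1 - real m / real n) ^ CARD('d)) * ln (real CARD('a))) \<longlonglongrightarrow> 0"
      by simp
    have ev1: "eventually (\<lambda>n. (1 - (1 - real m / real n) ^ CARD('d)) * ln (real CARD('a)) < (y - ?L) / 2) sequentially"
      by (rule order_tendstoD(2)[OF lim]) (use y in simp)
    have ev2: "eventually (\<lambda>n. m \<le> n) sequentially" by (rule eventually_ge_at_top)
    show "eventually (\<lambda>n. ent_seq \<mu> n < y) sequentially"
      using ev1 ev2
    proof eventually_elim
      case (elim n)
      have "ent_seq \<mu> n \<le> ent_seq \<mu> m + (1 - (1 - real m / real n) ^ CARD('d)) * ln (real CARD('a))"
        by (rule fekete_bound[OF inv]) (use m elim in auto)
      then show ?case using elim(1) elim(2) m(2) by (smt (verit, best) field_sum_of_halves)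
    qed
  qed
qed

lemma ms_entropy_INF:
  fixes \<mu> :: "('d::finite, 'a::finite) config measure"
  assumes inv: "\<mu> \<in> invariant_measures"
  shows "ms_entropy \<mu> = (INF m\<in>{1..}. ent_seq \<mu> m)"
  unfolding ms_entropy_ent_seq using ent_seq_tendsto[OF inv] by (rule limI)

lemma ms_entropy_le_ent_seq:
  fixes \<mu> :: "('d::finite, 'a::finite) config measure"
  assumes inv: "\<mu> \<in> invariant_measures" and "1 \<le> m"
  shows "ms_entropy \<mu> \<le> ent_seq \<mu> m"
  unfolding ms_entropy_INF[OF inv]
  by (rule cINF_lower[OF ent_seq_bdd[OF invariant_pm[OF inv]]]) (use assms in simp)

lemma ms_entropy_greatest:
  fixes \<mu> :: "('d::finite, 'a::finite) config measure"
  assumes inv: "\<mu> \<in> invariant_measures" and "\<And>m. 1 \<le> m \<Longrightarrow> X \<le> ent_seq \<mu> m"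
  shows "X \<le> ms_entropy \<mu>"
  unfolding ms_entropy_INF[OF inv]
  by (rule cINF_greatest) (use assms in auto)

lemma ms_entropy_nonneg:
  fixes \<mu> :: "('d::finite, 'a::finite) config measure"
  assumes inv: "\<mu> \<in> invariant_measures"
  shows "0 \<le> ms_entropy \<mu>"
  by (rule ms_entropy_greatest[OF inv ent_seq_nonneg[OF invariant_pm[OF inv]]])

lemma ms_entropy_le:
  fixes \<mu> :: "('d::finite, 'a::finite) config measure"
  assumes inv: "\<mu> \<in> invariant_measures"
  shows "ms_entropy \<mu> \<le> ln (real CARD('a))"
  using ms_entropy_le_ent_seq[OF inv, of 1] ent_seq_le[OF invariant_pm[OF inv], of 1] by simp

lemma topspace_shift[simp]: "topspace (shift_topology :: ('d, 'a) config topology) = UNIV"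
  by (simp add: shift_topology_def)

lemma compact_shift: "compact_space (shift_topology :: ('d, 'a::finite) config topology)"
  unfolding shift_topology_def
  by (simp add: compact_space_product_topology compact_space_discrete_topology)

lemma cyl_open:
  assumes "finite J" shows "openin shift_topology (cylinder J w)"
  unfolding shift_topology_def openin_product_topology_alt
proof (intro ballI)
  fix x assume x: "x \<in> cylinder J w"
  define U where "U = (\<lambda>i. if i \<in> J then {w i} else UNIV)"
  have "finite {i \<in> UNIV. U i \<noteq> topspace (discrete_topology UNIV)}"
    by (rule finite_subset[OF _ assms]) (auto simp: U_def split: if_splits)
  moreover have "x \<in> PiE UNIV U" using x by (auto simp: U_def cylinder_def PiE_UNIV_domain)
  moreover have "PiE UNIV U \<subseteq> cylinder J w" by (auto simp: U_def cylinder_def PiE_UNIV_domain Pi_def)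
  ultimately show "\<exists>U. finite {i \<in> UNIV. U i \<noteq> topspace (discrete_topology UNIV)} \<and>
             (\<forall>i\<in>UNIV. openin (discrete_topology UNIV) (U i)) \<and> x \<in> PiE UNIV U \<and> PiE UNIV U \<subseteq> cylinder J w"
    by auto
qed

lemma cyl_closed:
  fixes w :: "('d \<Rightarrow> int) \<Rightarrow> 'a::finite"
  assumes "finite J" shows "closedin shift_topology (cylinder J w)"
proof -
  have "UNIV - cylinder J w = (\<Union>v\<in>{v\<in>words J. v \<noteq> restrict w J}. cylinder J v)"
  proof safe
    fix x assume "x \<notin> cylinder J w"
    then have "restrict x J \<noteq> restrict w J" by (auto simp: cylinder_def restrict_def fun_eq_iff)
    then show "x \<in> (\<Union>v\<in>{v\<in>words J. v \<noteq> restrict w J}. cylinder J v)"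
      by (intro UN_I[of "restrict x J"]) (auto simp: cylinder_restrict)
  next
    fix x v assume a: "v \<in> words J" "v \<noteq> restrict w J" "x \<in> cylinder J v" "x \<in> cylinder J w"
    have "v = restrict x J" using a(1,3) by (simp add: cylinder_eq_vimage)
    moreover have "restrict x J = restrict w J" using a(4) by (auto simp: cylinder_def restrict_def)
    ultimately show False using a(2) by simp
  qed simp
  moreover have "openin shift_topology (\<Union>v\<in>{v\<in>words J. v \<noteq> restrict w J}. cylinder J v)"
    by (rule openin_Union) (auto intro: cyl_open[OF assms])
  ultimately show ?thesis unfolding closedin_def by simp
qed

lemma unif_approx:
  fixes \<phi> :: "('d, 'a::finite) config \<Rightarrow> real"
  assumes cont: "continuous_map shift_topology euclideanreal \<phi>" and e: "0 < e"
  shows "\<exists>\<Lambda>. finite \<Lambda> \<and> (\<forall>x y. (\<forall>i\<in>\<Lambda>. x i = y i) \<longrightarrow> \<bar>\<phi> x - \<phi> y\<bar> < e)"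
proof -
  have "\<forall>x. \<exists>\<Lambda>. finite \<Lambda> \<and> (\<forall>y\<in>cylinder \<Lambda> x. \<bar>\<phi> y - \<phi> x\<bar> < e / 2)"
  proof
    fix x
    let ?U = "{y \<in> topspace shift_topology. \<phi> y \<in> ball (\<phi> x) (e / 2)}"
    have "openin shift_topology ?U" by (rule openin_continuous_map_preimage[OF cont]) simp
    moreover have "x \<in> ?U" using e by simp
    ultimately obtain U where U: "finite {i \<in> UNIV. U i \<noteq> topspace (discrete_topology (UNIV::'a set))}"
      "x \<in> PiE UNIV U" "PiE UNIV U \<subseteq> ?U"
      unfolding shift_topology_def openin_product_topology_alt by blast
    let ?L = "{i. U i \<noteq> UNIV}"
    have "cylinder ?L x \<subseteq> PiE UNIV U"
    proof
      fix y assume y: "y \<in> cylinder ?L x"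
      have "y i \<in> U i" for i
      proof (cases "U i = UNIV")
        case False
        then have "y i = x i" using y by (auto simp: cylinder_def)
        then show ?thesis using U(2) by (auto simp: PiE_UNIV_domain)
      qed simp
      then show "y \<in> PiE UNIV U" by (simp add: PiE_UNIV_domain)
    qed
    then have "\<forall>y\<in>cylinder ?L x. \<bar>\<phi> y - \<phi> x\<bar> < e / 2"
    proof (intro ballI)
      fix y assume "cylinder ?L x \<subseteq> PiE UNIV U" "y \<in> cylinder ?L x"
      then have "y \<in> ?U" using U(3) by blast
      then show "\<bar>\<phi> y - \<phi> x\<bar> < e / 2" by (simp add: dist_real_def abs_minus_commute)
    qed
    then show "\<exists>\<Lambda>. finite \<Lambda> \<and> (\<forall>y\<in>cylinder \<Lambda> x. \<bar>\<phi> y - \<phi> x\<bar> < e / 2)"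
      using U(1) by auto
  qed
  then obtain L where L: "\<And>x. finite (L x)" "\<And>x y. y \<in> cylinder (L x) x \<Longrightarrow> \<bar>\<phi> y - \<phi> x\<bar> < e / 2"
    by metis
  have "\<exists>\<F>. finite \<F> \<and> \<F> \<subseteq> range (\<lambda>x. cylinder (L x) x) \<and> topspace shift_topology \<subseteq> \<Union>\<F>"
    using compact_shift[unfolded compact_space_alt, rule_format, of "range (\<lambda>x. cylinder (L x) x)"]
      cyl_open[OF L(1)] cylinder_restrict
    by (auto simp: cylinder_def)
  then obtain F where F: "finite F" "F \<subseteq> range (\<lambda>x. cylinder (L x) x)" "UNIV \<subseteq> \<Union>F"
    by auto
  then obtain X0 where X0: "finite X0" "F = (\<lambda>x. cylinder (L x) x) ` X0"
    by (meson finite_subset_image)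
  show ?thesis
  proof (intro exI conjI allI impI)
    show "finite (\<Union>x\<in>X0. L x)" using X0 L by auto
    fix y z :: "('d, 'a) config" assume yz: "\<forall>i\<in>(\<Union>x\<in>X0. L x). y i = z i"
    obtain x where x: "x \<in> X0" "y \<in> cylinder (L x) x" using F(3) X0(2) by auto
    have "z \<in> cylinder (L x) x" using x yz by (auto simp: cylinder_def)
    then have "\<bar>\<phi> z - \<phi> x\<bar> < e / 2" by (rule L(2))
    moreover have "\<bar>\<phi> y - \<phi> x\<bar> < e / 2" using x(2) by (rule L(2))
    ultimately show "\<bar>\<phi> y - \<phi> z\<bar> < e" by linarith
  qed
qed

lemma cylfun_eq:
  fixes \<phi> :: "('d, 'a::finite) config \<Rightarrow> real"
  assumes "finite \<Lambda>"
  shows "\<phi> (restrict x \<Lambda>) = (\<Sum>w\<in>words \<Lambda>. \<phi> w * indicator (cylinder \<Lambda> w) x)"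
proof -
  have "(\<Sum>w\<in>words \<Lambda>. \<phi> w * indicator (cylinder \<Lambda> w) x) =
      (\<Sum>w\<in>words \<Lambda>. if w = restrict x \<Lambda> then \<phi> w else 0)"
    by (intro sum.cong refl) (auto simp: cylinder_eq_vimage indicator_def)
  also have "\<dots> = \<phi> (restrict x \<Lambda>)"
    using assms by (simp add: sum.delta')
  finally show ?thesis ..
qed

lemma restrict_agree: "\<forall>i\<in>\<Lambda>. x i = restrict x \<Lambda> i"
  by simp

lemma pm_borel: "pm \<mu> \<Longrightarrow> borel_measurable \<mu> = borel_measurable shift_space"
  unfolding pm_def by (intro measurable_cong_sets) auto

lemma abs_integral_le_prob:
  fixes f :: "'b \<Rightarrow> real"
  assumes "prob_space M" "integrable M f" "\<And>x. \<bar>f x\<bar> \<le> B"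
  shows "\<bar>integral\<^sup>L M f\<bar> \<le> B"
proof -
  interpret prob_space M by fact
  have "integral\<^sup>L M f \<le> B"
    by (rule integral_le_const[OF assms(2)]) (use assms(3) abs_le_D1 in \<open>auto intro!: AE_I2\<close>)
  moreover have "- B \<le> integral\<^sup>L M f"
  proof (rule integral_ge_const[OF assms(2)])
    have "- B \<le> f x" for x using assms(3)[of x] by (simp add: abs_le_iff)
    then show "AE x in M. - B \<le> f x" by (intro AE_I2)
  qed
  ultimately show ?thesis by linarith
qed

lemma phi_bounded:
  fixes \<phi> :: "('d, 'a::finite) config \<Rightarrow> real"
  assumes cont: "continuous_map shift_topology euclideanreal \<phi>"
  shows "\<exists>B. \<forall>x. \<bar>\<phi> x\<bar> \<le> B"
proof -
  obtain \<Lambda> where L: "finite \<Lambda>" "\<And>x y. (\<forall>i\<in>\<Lambda>. x i = y i) \<Longrightarrow> \<bar>\<phi> x - \<phi> y\<bar> < 1"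
    using unif_approx[OF cont, of 1] by auto
  let ?B = "Max ((\<lambda>w. \<bar>\<phi> w\<bar>) ` words \<Lambda>) + 1"
  have "\<bar>\<phi> x\<bar> \<le> ?B" for x
  proof -
    have "\<bar>\<phi> x - \<phi> (restrict x \<Lambda>)\<bar> < 1" by (rule L(2)) simp
    moreover have "\<bar>\<phi> (restrict x \<Lambda>)\<bar> \<le> Max ((\<lambda>w. \<bar>\<phi> w\<bar>) ` words \<Lambda>)"
      by (rule Max_ge) (use L(1) in auto)
    ultimately show ?thesis by linarith
  qed
  then show ?thesis by blast
qed

lemma cylfun_measurable:
  fixes \<phi> :: "('d, 'a::finite) config \<Rightarrow> real"
  assumes "finite \<Lambda>"
  shows "(\<lambda>x. \<phi> (restrict x \<Lambda>)) \<in> borel_measurable shift_space"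
proof -
  have "(\<lambda>x. \<Sum>w\<in>words \<Lambda>. \<phi> w * indicator (cylinder \<Lambda> w) x) \<in> borel_measurable shift_space"
    by (intro borel_measurable_sum borel_measurable_times borel_measurable_const
        borel_measurable_indicator cylinder_sets assms)
  then show ?thesis unfolding cylfun_eq[OF assms] .
qed

lemma phi_measurable:
  fixes \<phi> :: "('d, 'a::finite) config \<Rightarrow> real"
  assumes cont: "continuous_map shift_topology euclideanreal \<phi>"
  shows "\<phi> \<in> borel_measurable shift_space"
proof -
  have "\<forall>n. \<exists>\<Lambda>. finite \<Lambda> \<and> (\<forall>x y. (\<forall>i\<in>\<Lambda>. x i = y i) \<longrightarrow> \<bar>\<phi> x - \<phi> y\<bar> < 1 / Suc n)"
    using unif_approx[OF cont] by simp
  then obtain L where L: "\<And>n. finite (L n)" "\<And>n x y. (\<forall>i\<in>L n. x i = y i) \<Longrightarrow> \<bar>\<phi> x - \<phi> y\<bar> < 1 / Suc n"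
    by metis
  show ?thesis
  proof (rule borel_measurable_LIMSEQ_real)
    fix n show "(\<lambda>x. \<phi> (restrict x (L n))) \<in> borel_measurable shift_space"
      by (rule cylfun_measurable[OF L(1)])
  next
    fix x
    have "(\<lambda>n. \<phi> (restrict x (L n)) - \<phi> x) \<longlonglongrightarrow> 0"
    proof (rule Lim_null_comparison)
      show "eventually (\<lambda>n. norm (\<phi> (restrict x (L n)) - \<phi> x) \<le> 1 / Suc n) sequentially"
        using L(2)[of n "restrict x (L n)" x for n] by (auto intro!: always_eventually less_imp_le)
      show "(\<lambda>n. 1 / real (Suc n)) \<longlonglongrightarrow> 0" by (rule LIMSEQ_Suc[OF lim_inverse_n'])
    qed
    then show "(\<lambda>n. \<phi> (restrict x (L n))) \<longlonglongrightarrow> \<phi> x" by (rule LIM_zero_cancel)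
  qed
qed

lemma phi_integrable:
  fixes \<phi> :: "('d, 'a::finite) config \<Rightarrow> real"
  assumes cont: "continuous_map shift_topology euclideanreal \<phi>" and pm: "pm \<mu>"
  shows "integrable \<mu> \<phi>"
proof -
  interpret prob_space \<mu> using pm by (simp add: pm_def)
  obtain B where B: "\<And>x. \<bar>\<phi> x\<bar> \<le> B" using phi_bounded[OF cont] by auto
  have m: "\<phi> \<in> borel_measurable \<mu>"
    unfolding pm_borel[OF pm] by (rule phi_measurable[OF cont])
  show ?thesis by (rule integrable_const_bound[where B=B]) (use B m in auto)
qed

lemma integral_bound:
  fixes \<phi> :: "('d, 'a::finite) config \<Rightarrow> real"
  assumes cont: "continuous_map shift_topology euclideanreal \<phi>" and pm: "pm \<mu>"
    and B: "\<And>x. \<bar>\<phi> x\<bar> \<le> B"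
  shows "\<bar>integral\<^sup>L \<mu> \<phi>\<bar> \<le> B"
proof -
  interpret prob_space \<mu> using pm by (simp add: pm_def)
  show ?thesis
    by (rule abs_integral_le_prob[OF _ phi_integrable[OF cont pm] B]) (use pm in \<open>simp add: pm_def\<close>)
qed

lemma integral_cylfun:
  fixes \<phi> :: "('d, 'a::finite) config \<Rightarrow> real"
  assumes pm: "pm \<mu>" and "finite \<Lambda>"
  shows "(\<integral>x. \<phi> (restrict x \<Lambda>) \<partial>\<mu>) = (\<Sum>w\<in>words \<Lambda>. \<phi> w * measure \<mu> (cylinder \<Lambda> w))"
proof -
  interpret prob_space \<mu> using pm by (simp add: pm_def)
  have "(\<integral>x. \<phi> (restrict x \<Lambda>) \<partial>\<mu>) = (\<integral>x. (\<Sum>w\<in>words \<Lambda>. \<phi> w * indicator (cylinder \<Lambda> w) x) \<partial>\<mu>)"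
    unfolding cylfun_eq[OF assms(2)] ..
  also have "\<dots> = (\<Sum>w\<in>words \<Lambda>. (\<integral>x. \<phi> w * indicator (cylinder \<Lambda> w) x \<partial>\<mu>))"
    by (rule Bochner_Integration.integral_sum) (use pm_cyl_sets[OF pm assms(2)] in \<open>auto intro!: integrable_real_indicator simp: less_top[symmetric]\<close>)
  also have "\<dots> = (\<Sum>w\<in>words \<Lambda>. \<phi> w * measure \<mu> (cylinder \<Lambda> w))"
    by (intro sum.cong refl) (use pm_cyl_sets[OF pm assms(2)] in simp)
  finally show ?thesis .
qed

lemma integral_approx:
  fixes \<phi> :: "('d, 'a::finite) config \<Rightarrow> real"
  assumes cont: "continuous_map shift_topology euclideanreal \<phi>" and pm: "pm \<mu>"
    and L: "finite \<Lambda>" "\<And>x y. (\<forall>i\<in>\<Lambda>. x i = y i) \<Longrightarrow> \<bar>\<phi> x - \<phi> y\<bar> < e"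
  shows "\<bar>integral\<^sup>L \<mu> \<phi> - (\<Sum>w\<in>words \<Lambda>. \<phi> w * measure \<mu> (cylinder \<Lambda> w))\<bar> \<le> e"
proof -
  interpret prob_space \<mu> using pm by (simp add: pm_def)
  have i1: "integrable \<mu> \<phi>" by (rule phi_integrable[OF cont pm])
  obtain B where B: "\<And>x. \<bar>\<phi> x\<bar> \<le> B" using phi_bounded[OF cont] by auto
  have m2: "(\<lambda>x. \<phi> (restrict x \<Lambda>)) \<in> borel_measurable \<mu>"
    unfolding pm_borel[OF pm] by (rule cylfun_measurable[OF L(1)])
  have i2: "integrable \<mu> (\<lambda>x. \<phi> (restrict x \<Lambda>))"
    by (rule integrable_const_bound[where B=B]) (use B m2 in auto)
  have "integral\<^sup>L \<mu> \<phi> - (\<Sum>w\<in>words \<Lambda>. \<phi> w * measure \<mu> (cylinder \<Lambda> w)) =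
      (\<integral>x. \<phi> x - \<phi> (restrict x \<Lambda>) \<partial>\<mu>)"
    unfolding integral_cylfun[OF pm L(1), symmetric] using i1 i2 by simp
  also have "\<bar>\<dots>\<bar> \<le> e"
    by (rule abs_integral_le_prob) (use pm i1 i2 L(2) in \<open>auto simp: pm_def intro: less_imp_le\<close>)
  finally show ?thesis .
qed

lemma bounded_subseq_convergent:
  fixes g :: "nat \<Rightarrow> real"
  assumes "\<And>k. \<bar>g k\<bar> \<le> 1"
  shows "\<exists>r. strict_mono r \<and> convergent (g \<circ> r)"
proof -
  obtain r where r: "strict_mono r" "monoseq (\<lambda>n. g (r n))" using seq_monosub by blast
  have "Bseq (\<lambda>n. g (r n))" using assms by (intro BseqI[of 1]) auto
  then have "convergent (\<lambda>n. g (r n))" using r(2) by (rule Bseq_monoseq_convergent)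
  then show ?thesis using r(1) by (auto simp: o_def)
qed

lemma fin_extract:
  fixes g :: "'b \<Rightarrow> nat \<Rightarrow> real"
  assumes "finite W" "\<And>w k. w \<in> W \<Longrightarrow> \<bar>g w k\<bar> \<le> 1"
  shows "\<exists>r. strict_mono r \<and> (\<forall>w\<in>W. convergent (\<lambda>k. g w (r k)))"
  using assms
proof (induction W rule: finite_induct)
  case empty
  show ?case by (intro exI[of _ id]) (auto simp: strict_mono_def)
next
  case (insert w0 W)
  obtain r where r: "strict_mono r" "\<forall>w\<in>W. convergent (\<lambda>k. g w (r k))"
    using insert by auto
  obtain r2 where r2: "strict_mono r2" "convergent ((\<lambda>k. g w0 (r k)) \<circ> r2)"
    using bounded_subseq_convergent[of "\<lambda>k. g w0 (r k)"] insert.prems by auto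
  have "\<forall>w\<in>insert w0 W. convergent (\<lambda>k. g w ((r \<circ> r2) k))"
  proof
    fix w assume "w \<in> insert w0 W"
    then show "convergent (\<lambda>k. g w ((r \<circ> r2) k))"
    proof
      assume "w = w0" then show ?thesis using r2(2) by (simp add: o_def)
    next
      assume "w \<in> W"
      then have "convergent ((\<lambda>k. g w (r k)) \<circ> r2)"
        using r(2) r2(1) by (intro convergent_subseq_convergent) auto
      then show ?thesis by (simp add: o_def)
    qed
  qed
  moreover have "strict_mono (r \<circ> r2)" using r(1) r2(1) by (rule strict_mono_o)
  ultimately show ?case by blast
qed

lemma diag_extract:
  fixes f :: "nat \<Rightarrow> 'b \<Rightarrow> nat \<Rightarrow> real"
  assumes fin: "\<And>n. finite (W n)" and bnd: "\<And>n w k. w \<in> W n \<Longrightarrow> \<bar>f n w k\<bar> \<le> 1"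
  shows "\<exists>r. strict_mono r \<and> (\<forall>n. \<forall>w\<in>W n. convergent (\<lambda>k. f n w (r k)))"
proof -
  define P where "P = (\<lambda>n (s :: nat \<Rightarrow> nat). \<forall>w\<in>W n. convergent (\<lambda>k. f n w (s k)))"
  interpret subseqs P
  proof
    fix n and s :: "nat \<Rightarrow> nat" assume "strict_mono s"
    obtain r where r: "strict_mono r" "\<forall>w\<in>W n. convergent (\<lambda>k. f n w (s (r k)))"
      using fin_extract[of "W n" "\<lambda>w k. f n w (s k)"] fin bnd by auto
    then show "\<exists>r'. strict_mono r' \<and> P n (s \<circ> r')" unfolding P_def by (auto simp: o_def)
  qed
  have stable: "P n (s \<circ> r)" if "strict_mono r" "P n s" for r s n
  proof -
    have "convergent ((\<lambda>k. f n w (s k)) \<circ> r)" if "w \<in> W n" for w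
      using \<open>P n s\<close> \<open>strict_mono r\<close> that unfolding P_def by (intro convergent_subseq_convergent) auto
    then show ?thesis unfolding P_def by (simp add: o_def)
  qed
  have "\<forall>w\<in>W n. convergent (\<lambda>k. f n w (diagseq k))" for n
  proof
    fix w assume w: "w \<in> W n"
    have "P n (diagseq \<circ> (+) (Suc n))" by (rule diagseq_holds[OF stable]) auto
    then have "convergent (\<lambda>k. f n w (diagseq (k + Suc n)))"
      using w unfolding P_def by (simp add: o_def add.commute)
    then obtain l where "(\<lambda>k. f n w (diagseq (k + Suc n))) \<longlonglongrightarrow> l" by (auto simp: convergent_def)
    then have "(\<lambda>k. f n w (diagseq k)) \<longlonglongrightarrow> l" by (rule LIMSEQ_offset)
    then show "convergent (\<lambda>k. f n w (diagseq k))" by (auto simp: convergent_def)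
  qed
  then show ?thesis using subseq_diagseq by blast
qed

definition cb :: "nat \<Rightarrow> ('d \<Rightarrow> int) set" where
  "cb n = {i. \<forall>k. \<bar>i k\<bar> \<le> int n}"

lemma finite_cb[simp]: "finite (cb n :: ('d::finite \<Rightarrow> int) set)"
proof -
  have "(cb n :: ('d \<Rightarrow> int) set) = PiE UNIV (\<lambda>_. {- int n..int n})"
    unfolding PiE_UNIV_domain cb_def Pi_def by (simp add: abs_le_iff minus_le_iff conj_commute)
  then show ?thesis by (simp add: finite_PiE)
qed

lemma finite_in_cb:
  assumes "finite (J :: ('d::finite \<Rightarrow> int) set)"
  shows "\<exists>n. J \<subseteq> cb n"
proof -
  define n where "n = Max (insert 0 ((\<lambda>(i, k). nat \<bar>i k\<bar>) ` (J \<times> UNIV)))"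
  have "J \<subseteq> cb n"
  proof
    fix i assume i: "i \<in> J"
    have "\<bar>i k\<bar> \<le> int n" for k
    proof -
      have "nat \<bar>i k\<bar> \<le> n" unfolding n_def
        by (rule Max_ge) (use assms i in auto)
      then show ?thesis by simp
    qed
    then show "i \<in> cb n" by (simp add: cb_def)
  qed
  then show ?thesis by blast
qed

lemma emb_cylinders:
  fixes X :: "(('d \<Rightarrow> int) \<Rightarrow> 'a::finite) set"
  assumes "finite J"
  shows "prod_emb UNIV (\<lambda>_. count_space UNIV) J X = (\<Union>w\<in>X \<inter> words J. cylinder J w)"
proof safe
  fix x assume "x \<in> prod_emb UNIV (\<lambda>_. count_space UNIV) J X"
  then have "restrict x J \<in> X" by (simp add: prod_emb_def)
  then show "x \<in> (\<Union>w\<in>X \<inter> words J. cylinder J w)"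
    by (intro UN_I[of "restrict x J"]) (auto simp: cylinder_restrict)
next
  fix x w assume "w \<in> X" "w \<in> words J" "x \<in> cylinder J w"
  then show "x \<in> prod_emb UNIV (\<lambda>_. count_space UNIV) J X"
    by (simp add: prod_emb_def cylinder_eq_vimage)
qed

lemma cyl_measure_eq:
  fixes \<nu>1 \<nu>2 :: "('d, 'a::finite) config measure"
  assumes pm1: "pm \<nu>1" and pm2: "pm \<nu>2"
    and eq: "\<And>J w. finite J \<Longrightarrow> measure \<nu>1 (cylinder J w) = measure \<nu>2 (cylinder J w)"
  shows "\<nu>1 = \<nu>2"
proof (rule measure_eqI_PiM_infinite)
  show "sets \<nu>1 = PiM UNIV (\<lambda>_. count_space UNIV)" "sets \<nu>2 = PiM UNIV (\<lambda>_. count_space UNIV)"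
    using pm1 pm2 by (simp_all add: pm_def shift_space_def)
  show "finite_measure \<nu>1" using pm1 by (simp add: pm_def prob_space_def)
  fix A and J :: "('d \<Rightarrow> int) set" assume J: "finite J"
  have meq: "measure \<nu> (\<Union>w\<in>PiE J A \<inter> words J. cylinder J w) =
      (\<Sum>w\<in>PiE J A \<inter> words J. measure \<nu> (cylinder J w))" if pm: "pm \<nu>" for \<nu> :: "('d, 'a) config measure"
  proof -
    interpret prob_space \<nu> using pm by (simp add: pm_def)
    show ?thesis
      apply (rule measure_finite_Union)
      using J pm_cyl_sets[OF pm J]
        apply (auto simp: disjoint_family_on_def)
      by (metis IntI cylinder_disj empty_iff)
  qed
  have fm: "emeasure \<nu> X = ennreal (measure \<nu> X)" if "pm \<nu>" for \<nu> :: "('d, 'a) config measure" and X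
  proof -
    interpret prob_space \<nu> using that by (simp add: pm_def)
    show ?thesis by (rule emeasure_eq_measure)
  qed
  show "emeasure \<nu>1 (prod_emb UNIV (\<lambda>_. count_space UNIV) J (PiE J A)) =
        emeasure \<nu>2 (prod_emb UNIV (\<lambda>_. count_space UNIV) J (PiE J A))"
    unfolding emb_cylinders[OF J] fm[OF pm1] fm[OF pm2] meq[OF pm1] meq[OF pm2]
    using eq[OF J] by simp
qed

lemma pm_measure_le1: "pm \<mu> \<Longrightarrow> \<bar>measure \<mu> A\<bar> \<le> 1"
  unfolding pm_def using prob_space.prob_le_1 by (metis abs_of_nonneg measure_nonneg)

lemma compactness:
  fixes \<mu> :: "nat \<Rightarrow> ('d::finite, 'a::finite) config measure"
  assumes inv: "\<And>k. \<mu> k \<in> invariant_measures"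
  shows "\<exists>r \<nu>. strict_mono r \<and> \<nu> \<in> invariant_measures \<and>
    (\<forall>J w. finite J \<longrightarrow> (\<lambda>k. measure (\<mu> (r k)) (cylinder J w)) \<longlonglongrightarrow> measure \<nu> (cylinder J w))"
proof -
  have pm: "pm (\<mu> k)" for k using inv by (rule invariant_pm)
  obtain r where r: "strict_mono r"
    "\<And>n w. w \<in> words (cb n) \<Longrightarrow> convergent (\<lambda>k. measure (\<mu> (r k)) (cylinder (cb n) w))"
    using diag_extract[of "\<lambda>n. words (cb n)" "\<lambda>n w k. measure (\<mu> k) (cylinder (cb n) w)"]
      pm_measure_le1[OF pm] by auto
  have conv: "convergent (\<lambda>k. measure (\<mu> (r k)) (cylinder J w))" if J: "finite J" for J w
  proof -
    obtain n where n: "J \<subseteq> cb n" using finite_in_cb[OF J] by auto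
    have cyl: "cylinder J w = cylinder J (restrict w J)" by (rule cylinder_cong) simp
    have "convergent (\<lambda>k. \<Sum>v\<in>{v\<in>words (cb n). restrict v J = restrict w J}. measure (\<mu> (r k)) (cylinder (cb n) v))"
      by (intro convergent_sum r(2)) auto
    then show ?thesis
      unfolding cyl using measure_cylinder_split[OF pm n finite_cb restrict_in_words] by simp
  qed
  define q where "q J w = lim (\<lambda>k. measure (\<mu> (r k)) (cylinder J w))" for J w
  have qlim: "(\<lambda>k. measure (\<mu> (r k)) (cylinder J w)) \<longlonglongrightarrow> q J w" if "finite J" for J w
    unfolding q_def using conv[OF that] by (simp add: convergent_LIMSEQ_iff)
  have q_nonneg: "0 \<le> q J w" if "finite J" for J w
    by (rule LIMSEQ_le_const[OF qlim[OF that]]) (simp add: measure_nonneg)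
  have q_split: "q J w = (\<Sum>v\<in>{v\<in>words H. restrict v J = w}. q H v)"
    if "J \<subseteq> H" "finite H" "w \<in> words J" for J H w
  proof -
    have fJ: "finite J" using that finite_subset by auto
    have "(\<lambda>k. \<Sum>v\<in>{v\<in>words H. restrict v J = w}. measure (\<mu> (r k)) (cylinder H v)) \<longlonglongrightarrow>
        (\<Sum>v\<in>{v\<in>words H. restrict v J = w}. q H v)"
      by (intro tendsto_sum qlim that)
    then have "(\<lambda>k. measure (\<mu> (r k)) (cylinder J w)) \<longlonglongrightarrow> (\<Sum>v\<in>{v\<in>words H. restrict v J = w}. q H v)"
      using measure_cylinder_split[OF pm that] by simp
    then show ?thesis using qlim[OF fJ] LIMSEQ_unique by blast
  qed
  have q_sum: "(\<Sum>v\<in>words H. q H v) = 1" if "finite H" for H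
  proof -
    have "(\<lambda>k. \<Sum>v\<in>words H. measure (\<mu> (r k)) (cylinder H v)) \<longlonglongrightarrow> (\<Sum>v\<in>words H. q H v)"
      by (intro tendsto_sum qlim that)
    then have "(\<lambda>k. 1::real) \<longlonglongrightarrow> (\<Sum>v\<in>words H. q H v)"
      using measure_cylinder_sum[OF pm that] by simp
    then show ?thesis using LIMSEQ_unique tendsto_const by blast
  qed
  define M where "M = (\<lambda>_::('d \<Rightarrow> int). count_space (UNIV::'a set))"
  define P where "P J = distr (point_measure (words J) (\<lambda>w. ennreal (q J w))) (PiM J M) (\<lambda>x. x)" for J
  have space_PiM_J: "space (PiM J M) = words J" for J
    by (simp add: space_PiM M_def words_def)
  have sets_P: "sets (P J) = sets (PiM J M)" for J by (simp add: P_def)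
  have space_P: "space (P J) = words J" for J by (simp add: P_def space_PiM_J)
  have P_emeasure: "emeasure (P J) X = ennreal (\<Sum>w\<in>X \<inter> words J. q J w)"
    if J: "finite J" and X: "X \<in> sets (PiM J M)" for J X
  proof -
    have "emeasure (P J) X = emeasure (point_measure (words J) (\<lambda>w. ennreal (q J w))) ((\<lambda>x. x) -` X \<inter> words J)"
      unfolding P_def using X by (subst emeasure_distr) (auto simp: space_PiM_J space_point_measure)
    also have "\<dots> = (\<Sum>w\<in>X \<inter> words J. ennreal (q J w))"
      using J by (subst emeasure_point_measure_finite) auto
    also have "\<dots> = ennreal (\<Sum>w\<in>X \<inter> words J. q J w)"
      using J by (intro sum_ennreal q_nonneg)
    finally show ?thesis .
  qed
  have proj: "projective_family UNIV P M"
  proof (rule projective_family.intro)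
    fix J H :: "('d \<Rightarrow> int) set" assume JH: "J \<subseteq> H" "finite H" "H \<subseteq> UNIV"
    have fJ: "finite J" using JH finite_subset by auto
    have mr: "(\<lambda>f. restrict f J) \<in> measurable (P H) (PiM J M)"
      using measurable_restrict_subset[OF JH(1), of M] by (simp add: measurable_cong_sets[OF sets_P refl])
    show "P J = distr (P H) (PiM J M) (\<lambda>f. restrict f J)"
    proof (rule measure_eqI)
      show "sets (P J) = sets (distr (P H) (PiM J M) (\<lambda>f. restrict f J))" by (simp add: sets_P)
      fix X assume "X \<in> sets (P J)"
      then have X: "X \<in> sets (PiM J M)" by (simp add: sets_P)
      have X': "(\<lambda>f. restrict f J) -` X \<inter> words H \<in> sets (PiM H M)"
        using measurable_sets[OF measurable_restrict_subset[OF JH(1), of M] X]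
        by (simp add: space_PiM_J)
      have "(\<Sum>w\<in>X \<inter> words J. q J w) = (\<Sum>w\<in>X \<inter> words J. \<Sum>v\<in>{v\<in>words H. restrict v J = w}. q H v)"
        by (intro sum.cong refl q_split JH) auto
      also have "\<dots> = (\<Sum>w\<in>X \<inter> words J. \<Sum>v\<in>{v\<in>(\<lambda>f. restrict f J) -` X \<inter> words H. restrict v J = w}. q H v)"
        by (intro sum.cong refl) auto
      also have "\<dots> = (\<Sum>v\<in>(\<lambda>f. restrict f J) -` X \<inter> words H. q H v)"
        by (rule sum.group) (use JH(2) fJ in auto)
      finally have eq: "(\<Sum>w\<in>X \<inter> words J. q J w) = (\<Sum>v\<in>(\<lambda>f. restrict f J) -` X \<inter> words H. q H v)" .
      show "emeasure (P J) X = emeasure (distr (P H) (PiM J M) (\<lambda>f. restrict f J)) X"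
        using X X' eq JH(2) fJ
        by (simp add: emeasure_distr[OF mr X] P_emeasure space_P Int_absorb2)
    qed
  next
    fix J :: "('d \<Rightarrow> int) set" assume J: "finite J" "J \<subseteq> UNIV"
    show "prob_space (P J)"
    proof (rule prob_spaceI)
      have "space (P J) \<in> sets (PiM J M)" by (simp add: space_P flip: space_PiM_J)
      then show "emeasure (P J) (space (P J)) = 1"
        using J by (simp add: P_emeasure space_P q_sum)
    qed
  qed
  interpret PF: projective_family UNIV P M by (rule proj)
  have cont: "(\<Inter>i. prod_emb UNIV M (Js i) (Xs i)) \<noteq> {}"
    if Js: "\<And>i. Js i \<subseteq> UNIV" "incseq Js" "\<And>i. finite (Js i)"
      and Xs: "\<And>i. Xs i \<in> sets (PiM (Js i) M)"
      and dec: "decseq (\<lambda>i. prod_emb UNIV M (Js i) (Xs i))"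
      and pos: "0 < (INF i. emeasure (P (Js i)) (Xs i))" for Js Xs
  proof (rule compact_space_imp_nest[OF compact_shift _ _ dec])
    fix i
    have eq: "prod_emb UNIV M (Js i) (Xs i) = (\<Union>w\<in>Xs i \<inter> words (Js i). cylinder (Js i) w)"
      unfolding M_def by (rule emb_cylinders[OF Js(3)])
    show "closedin shift_topology (prod_emb UNIV M (Js i) (Xs i))"
      unfolding eq by (rule closedin_Union) (use Js(3) cyl_closed in auto)
    have "0 < emeasure (P (Js i)) (Xs i)"
      using pos by (rule less_le_trans) (rule INF_lower, simp)
    then have "(\<Sum>w\<in>Xs i \<inter> words (Js i). q (Js i) w) \<noteq> 0"
      using P_emeasure[OF Js(3) Xs] by auto
    then obtain w where w: "w \<in> Xs i \<inter> words (Js i)"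
      by (metis equals0I sum.empty)
    have "w \<in> cylinder (Js i) w" by (simp add: cylinder_def)
    then show "prod_emb UNIV M (Js i) (Xs i) \<noteq> {}" unfolding eq using w by blast
  qed
  define \<nu> where "\<nu> = PF.lim"
  have sets_nu: "sets \<nu> = sets shift_space"
    unfolding \<nu>_def PF.sets_lim by (simp add: shift_space_def M_def)
  have space_nu: "space \<nu> = UNIV"
    using sets_eq_imp_space_eq[OF sets_nu] by simp
  have nu_cyl: "emeasure \<nu> (cylinder J w) = ennreal (q J (restrict w J))" if J: "finite J" for J w
  proof -
    have single: "{restrict w J} = PiE J (\<lambda>i. {w i})"
      using PiE_singleton[of "restrict w J" J] by (simp cong: PiE_cong)
    have Xs: "{restrict w J} \<in> sets (PiM J M)"
      unfolding single by (rule sets_PiM_I_finite[OF J]) (simp add: M_def)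
    have ce: "cylinder J w = prod_emb UNIV M J {restrict w J}"
      unfolding M_def emb_cylinders[OF J] by (simp add: cylinder_cong[of J w "restrict w J"])
    have "emeasure PF.lim (prod_emb UNIV M J {restrict w J}) = emeasure (P J) {restrict w J}"
      by (rule PF.emeasure_lim[OF J _ Xs cont]) auto
    then have "emeasure \<nu> (cylinder J w) = emeasure (P J) {restrict w J}"
      unfolding \<nu>_def ce .
    also have "\<dots> = ennreal (q J (restrict w J))"
      using P_emeasure[OF J Xs] by simp
    finally show ?thesis .
  qed
  have prob_nu: "prob_space \<nu>"
  proof (rule prob_spaceI)
    have "emeasure \<nu> (space \<nu>) = emeasure \<nu> (cylinder {} (\<lambda>_. undefined))"
      using space_nu by simp
    also have "\<dots> = ennreal (q {} (\<lambda>_. undefined))"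
      using nu_cyl[of "{}" "\<lambda>_. undefined"] by (simp add: restrict_def)
    also have "q {} (\<lambda>_. undefined) = 1"
      using q_sum[of "{}"] by (simp add: words_empty)
    finally show "emeasure \<nu> (space \<nu>) = 1" by simp
  qed
  have pm_nu: "pm \<nu>" using prob_nu sets_nu by (simp add: pm_def)
  have nu_meas: "measure \<nu> (cylinder J w) = q J (restrict w J)" if J: "finite J" for J w
    using nu_cyl[OF J] q_nonneg[OF J] by (simp add: measure_def)
  have nu_lim: "(\<lambda>k. measure (\<mu> (r k)) (cylinder J w)) \<longlonglongrightarrow> measure \<nu> (cylinder J w)"
    if J: "finite J" for J w
  proof -
    have cyl: "cylinder J w = cylinder J (restrict w J)" by (rule cylinder_cong) simp
    show ?thesis unfolding nu_meas[OF J] using qlim[OF J, of "restrict w J"] cyl by simp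
  qed
  have inv_nu: "distr \<nu> shift_space (shift_map v) = \<nu>" for v
  proof (rule cyl_measure_eq)
    have mv: "shift_map v \<in> measurable \<nu> shift_space"
      using shift_map_measurable by (simp add: measurable_cong_sets[OF sets_nu refl])
    show "pm (distr \<nu> shift_space (shift_map v))"
      unfolding pm_def using prob_space.prob_space_distr[OF prob_nu mv] by simp
    show "pm \<nu>" by (rule pm_nu)
    fix J :: "('d \<Rightarrow> int) set" and w assume J: "finite J"
    have "measure (distr \<nu> shift_space (shift_map v)) (cylinder J w) =
        measure \<nu> (shift_map v -` cylinder J w \<inter> space \<nu>)"
      by (rule measure_distr[OF mv]) (simp add: J)
    also have "\<dots> = measure \<nu> (cylinder (trs v J) (trw v w))"
      by (simp add: space_nu shift_vimage_cylinder)
    also have "\<dots> = measure \<nu> (cylinder J w)"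
    proof -
      have "(\<lambda>k. measure (\<mu> (r k)) (cylinder (trs v J) (trw v w))) \<longlonglongrightarrow> measure \<nu> (cylinder (trs v J) (trw v w))"
        using J by (intro nu_lim) simp
      then have "(\<lambda>k. measure (\<mu> (r k)) (cylinder J w)) \<longlonglongrightarrow> measure \<nu> (cylinder (trs v J) (trw v w))"
        using inv_measure_cylinder[OF inv J] by simp
      then show ?thesis using nu_lim[OF J] LIMSEQ_unique by blast
    qed
    finally show "measure (distr \<nu> shift_space (shift_map v)) (cylinder J w) = measure \<nu> (cylinder J w)" .
  qed
  have "\<nu> \<in> invariant_measures"
    unfolding invariant_measures_def using sets_nu prob_nu inv_nu by auto
  then show ?thesis using r(1) nu_lim by blast
qed

lemma xlnx: "((\<lambda>x::real. x * ln x) \<longlongrightarrow> 0) (at_right 0)" by real_asymp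

lemma eta_alt: "eta t = - (t * ln t)"
  by (simp add: eta_def)

lemma eta_cont: "continuous_on {0..} eta"
  unfolding continuous_on_def
proof (intro ballI)
  fix x :: real assume x: "x \<in> {0..}"
  show "(eta \<longlongrightarrow> eta x) (at x within {0..})"
  proof (cases "x = 0")
    case True
    have "((\<lambda>t. - (t * ln t)) \<longlongrightarrow> - 0) (at_right (0::real))"
      by (intro tendsto_minus xlnx)
    then show ?thesis using True by (simp add: at_within_Ici_at_right eta_alt[abs_def] eta_def)
  next
    case False
    then have "0 < x" using x by simp
    then have "isCont (\<lambda>t. - (t * ln t)) x" by (intro continuous_intros) auto
    then have "isCont eta x" by (simp add: eta_alt[abs_def])
    then show ?thesis
      using continuous_at_imp_continuous_at_within[of x eta "{0..}"] by (simp add: continuous_within)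
  qed
qed

lemma eta_tendsto:
  assumes "f \<longlonglongrightarrow> y" "\<And>k. 0 \<le> f k"
  shows "(\<lambda>k. eta (f k)) \<longlonglongrightarrow> eta y"
proof -
  have "0 \<le> y" using assms by (intro LIMSEQ_le_const) auto
  then show ?thesis
    by (intro continuous_on_tendsto_compose[OF eta_cont assms(1)]) (use assms(2) in auto)
qed

lemma ent_seq_cont:
  fixes \<mu> :: "nat \<Rightarrow> ('d::finite, 'a::finite) config measure"
  assumes lim: "\<And>J w. finite J \<Longrightarrow> (\<lambda>k. measure (\<mu> k) (cylinder J w)) \<longlonglongrightarrow> measure \<nu> (cylinder J w)"
  shows "(\<lambda>k. ent_seq (\<mu> k) m) \<longlonglongrightarrow> ent_seq \<nu> m"
  unfolding ent_seq_def Hent_def divide_inverse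
  by (intro tendsto_mult_right tendsto_sum eta_tendsto lim) (auto simp: measure_nonneg)

lemma integral_cont:
  fixes \<mu> :: "nat \<Rightarrow> ('d::finite, 'a::finite) config measure" and \<phi> :: "('d, 'a) config \<Rightarrow> real"
  assumes cont: "continuous_map shift_topology euclideanreal \<phi>"
    and pm: "\<And>k. pm (\<mu> k)" "pm \<nu>"
    and lim: "\<And>J w. finite J \<Longrightarrow> (\<lambda>k. measure (\<mu> k) (cylinder J w)) \<longlonglongrightarrow> measure \<nu> (cylinder J w)"
  shows "(\<lambda>k. integral\<^sup>L (\<mu> k) \<phi>) \<longlonglongrightarrow> integral\<^sup>L \<nu> \<phi>"
proof (rule LIMSEQ_I)
  fix r :: real assume r: "0 < r"
  obtain L where L: "finite L" "\<And>x y. (\<forall>i\<in>L. x i = y i) \<Longrightarrow> \<bar>\<phi> x - \<phi> y\<bar> < r / 3"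
    using unif_approx[OF cont, of "r / 3"] r by auto
  define S where "S \<mu>' = (\<Sum>w\<in>words L. \<phi> w * measure \<mu>' (cylinder L w))" for \<mu>' :: "('d, 'a) config measure"
  have "(\<lambda>k. S (\<mu> k)) \<longlonglongrightarrow> S \<nu>"
    unfolding S_def by (intro tendsto_sum tendsto_mult tendsto_const lim L(1))
  then obtain N where N: "\<And>k. N \<le> k \<Longrightarrow> norm (S (\<mu> k) - S \<nu>) < r / 3"
    using LIMSEQ_D[of _ "S \<nu>" "r / 3"] r by auto
  show "\<exists>N. \<forall>k\<ge>N. norm (integral\<^sup>L (\<mu> k) \<phi> - integral\<^sup>L \<nu> \<phi>) < r"
  proof (intro exI allI impI)
    fix k assume k: "N \<le> k"
    have a: "\<bar>integral\<^sup>L (\<mu> k) \<phi> - S (\<mu> k)\<bar> \<le> r / 3"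
      unfolding S_def by (rule integral_approx[OF cont pm(1) L])
    have b: "\<bar>integral\<^sup>L \<nu> \<phi> - S \<nu>\<bar> \<le> r / 3"
      unfolding S_def by (rule integral_approx[OF cont pm(2) L])
    have c: "\<bar>S (\<mu> k) - S \<nu>\<bar> < r / 3" using N[OF k] by simp
    show "norm (integral\<^sup>L (\<mu> k) \<phi> - integral\<^sup>L \<nu> \<phi>) < r"
      unfolding real_norm_def abs_less_iff using a b c unfolding abs_le_iff abs_less_iff
      by (intro conjI) linarith+
  qed
qed

lemma inv_nonempty: "(invariant_measures :: ('d::finite, 'a::finite) config measure set) \<noteq> {}"
proof -
  let ?c = "(\<lambda>_. undefined) :: ('d, 'a) config"
  have "return shift_space ?c \<in> invariant_measures"
    unfolding invariant_measures_def
  proof (intro CollectI conjI allI)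
    show "sets (return shift_space ?c) = sets shift_space" by simp
    show "prob_space (return shift_space ?c)" by (rule prob_space_return) simp
    fix v
    have "distr (return shift_space ?c) shift_space (shift_map v) = return shift_space (shift_map v ?c)"
      by (rule distr_return) simp_all
    also have "shift_map v ?c = ?c" by (simp add: shift_map_def)
    finally show "distr (return shift_space ?c) shift_space (shift_map v) = return shift_space ?c" .
  qed
  then show ?thesis by blast
qed

lemma int_bound:
  fixes \<phi> :: "('d::finite, 'a::finite) config \<Rightarrow> real"
  assumes cont: "continuous_map shift_topology euclideanreal \<phi>" and B: "\<And>x. \<bar>\<phi> x\<bar> \<le> B"
    and inv: "\<nu> \<in> invariant_measures"
  shows "\<bar>integral\<^sup>L \<nu> \<phi>\<bar> \<le> B"
  by (rule integral_bound[OF cont invariant_pm[OF inv] B])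

lemma F_bdd:
  fixes \<phi> :: "('d::finite, 'a::finite) config \<Rightarrow> real"
  assumes cont: "continuous_map shift_topology euclideanreal \<phi>"
  shows "bdd_above ((\<lambda>\<nu>. ms_entropy \<nu> + \<beta> * integral\<^sup>L \<nu> \<phi>) ` invariant_measures)"
proof -
  obtain B where B: "\<And>x. \<bar>\<phi> x\<bar> \<le> B" using phi_bounded[OF cont] by auto
  have "ms_entropy \<nu> + \<beta> * integral\<^sup>L \<nu> \<phi> \<le> ln (real CARD('a)) + \<bar>\<beta>\<bar> * B"
    if inv: "\<nu> \<in> invariant_measures" for \<nu>
  proof -
    have "\<beta> * integral\<^sup>L \<nu> \<phi> \<le> \<bar>\<beta>\<bar> * \<bar>integral\<^sup>L \<nu> \<phi>\<bar>" by (simp add: abs_mult[symmetric])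
    also have "\<dots> \<le> \<bar>\<beta>\<bar> * B" by (intro mult_left_mono int_bound[OF cont B inv]) simp
    finally show ?thesis using ms_entropy_le[OF inv] by simp
  qed
  then show ?thesis by (intro bdd_aboveI2) 
qed

lemma press_ge:
  fixes \<phi> :: "('d::finite, 'a::finite) config \<Rightarrow> real"
  assumes cont: "continuous_map shift_topology euclideanreal \<phi>" and inv: "\<nu> \<in> invariant_measures"
  shows "ms_entropy \<nu> + \<beta> * integral\<^sup>L \<nu> \<phi> \<le> pressure \<phi> \<beta>"
  unfolding pressure_def by (rule cSUP_upper[OF inv F_bdd[OF cont]])

lemma press_le:
  fixes \<phi> :: "('d::finite, 'a::finite) config \<Rightarrow> real"
  assumes "\<And>\<nu>. \<nu> \<in> invariant_measures \<Longrightarrow> ms_entropy \<nu> + \<beta> * integral\<^sup>L \<nu> \<phi> \<le> X"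
  shows "pressure \<phi> \<beta> \<le> X"
  unfolding pressure_def by (rule cSUP_least[OF inv_nonempty]) (use assms in auto)

lemma press_lip:
  fixes \<phi> :: "('d::finite, 'a::finite) config \<Rightarrow> real"
  assumes cont: "continuous_map shift_topology euclideanreal \<phi>" and B: "\<And>x. \<bar>\<phi> x\<bar> \<le> B"
  shows "pressure \<phi> x \<le> pressure \<phi> y + B * \<bar>x - y\<bar>"
proof (rule press_le)
  fix \<nu> :: "('d, 'a) config measure" assume inv: "\<nu> \<in> invariant_measures"
  have "(x - y) * integral\<^sup>L \<nu> \<phi> \<le> \<bar>x - y\<bar> * \<bar>integral\<^sup>L \<nu> \<phi>\<bar>" by (simp add: abs_mult[symmetric])
  also have "\<dots> \<le> \<bar>x - y\<bar> * B" by (intro mult_left_mono int_bound[OF cont B inv]) simp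
  finally have "(x - y) * integral\<^sup>L \<nu> \<phi> \<le> B * \<bar>x - y\<bar>" by (metis mult.commute)
  moreover have "ms_entropy \<nu> + y * integral\<^sup>L \<nu> \<phi> \<le> pressure \<phi> y" by (rule press_ge[OF cont inv])
  ultimately show "ms_entropy \<nu> + x * integral\<^sup>L \<nu> \<phi> \<le> pressure \<phi> y + B * \<bar>x - y\<bar>"
    by (simp add: algebra_simps)
qed

lemma ES_nonempty:
  fixes \<phi> :: "('d::finite, 'a::finite) config \<Rightarrow> real"
  assumes cont: "continuous_map shift_topology euclideanreal \<phi>"
  shows "\<exists>\<mu>. \<mu> \<in> equilibrium_states \<phi> \<beta>"
proof -
  let ?F = "\<lambda>\<nu>. ms_entropy \<nu> + \<beta> * integral\<^sup>L \<nu> \<phi>"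
  let ?P = "pressure \<phi> \<beta>"
  have "\<exists>\<mu>. \<mu> \<in> invariant_measures \<and> ?P - 1 / Suc k < ?F \<mu>" for k
  proof -
    have "?P - 1 / Suc k < ?P" by simp
    then show ?thesis unfolding pressure_def
      using less_cSUP_iff[OF inv_nonempty F_bdd[OF cont]] by blast
  qed
  then obtain \<mu> where \<mu>: "\<And>k. \<mu> k \<in> invariant_measures" "\<And>k. ?P - 1 / Suc k < ?F (\<mu> k)"
    by metis
  obtain r \<nu> where r0: "strict_mono r" "\<nu> \<in> invariant_measures"
    "\<forall>J w. finite J \<longrightarrow> (\<lambda>k. measure (\<mu> (r k)) (cylinder J w)) \<longlonglongrightarrow> measure \<nu> (cylinder J w)"
    using compactness[of \<mu>, OF \<mu>(1)] by (elim exE conjE) (rule that)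
  have r: "strict_mono r" "\<nu> \<in> invariant_measures"
    "\<And>J w. finite J \<Longrightarrow> (\<lambda>k. measure (\<mu> (r k)) (cylinder J w)) \<longlonglongrightarrow> measure \<nu> (cylinder J w)"
    using r0 by auto
  have intlim: "(\<lambda>k. integral\<^sup>L (\<mu> (r k)) \<phi>) \<longlonglongrightarrow> integral\<^sup>L \<nu> \<phi>"
    by (rule integral_cont[OF cont invariant_pm[OF \<mu>(1)] invariant_pm[OF r(2)] r(3)])
  have "?P - \<beta> * integral\<^sup>L \<nu> \<phi> \<le> ent_seq \<nu> m" if m: "1 \<le> m" for m
  proof -
    have lim1: "(\<lambda>k. ent_seq (\<mu> (r k)) m + \<beta> * integral\<^sup>L (\<mu> (r k)) \<phi>) \<longlonglongrightarrow> ent_seq \<nu> m + \<beta> * integral\<^sup>L \<nu> \<phi>"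
      by (intro tendsto_add tendsto_mult tendsto_const intlim ent_seq_cont r(3))
    have lim2: "(\<lambda>k. ?P - 1 / Suc k) \<longlonglongrightarrow> ?P - 0"
      by (intro tendsto_diff tendsto_const LIMSEQ_Suc[OF lim_inverse_n'])
    have le: "?P - 1 / Suc k \<le> ent_seq (\<mu> (r k)) m + \<beta> * integral\<^sup>L (\<mu> (r k)) \<phi>" for k
    proof -
      have "k \<le> r k" using seq_suble[OF r(1)] by simp
      then have "1 / real (Suc (r k)) \<le> 1 / real (Suc k)" by (intro divide_left_mono) auto
      then have "?P - 1 / Suc k \<le> ?P - 1 / Suc (r k)" by simp
      also have "\<dots> < ?F (\<mu> (r k))" by (rule \<mu>(2))
      also have "\<dots> \<le> ent_seq (\<mu> (r k)) m + \<beta> * integral\<^sup>L (\<mu> (r k)) \<phi>"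
        using ms_entropy_le_ent_seq[OF \<mu>(1) m] by simp
      finally show ?thesis by simp
    qed
    have "?P - 0 \<le> ent_seq \<nu> m + \<beta> * integral\<^sup>L \<nu> \<phi>"
      by (rule LIMSEQ_le[OF lim2 lim1]) (use le in auto)
    then show ?thesis by simp
  qed
  then have "?P - \<beta> * integral\<^sup>L \<nu> \<phi> \<le> ms_entropy \<nu>"
    by (intro ms_entropy_greatest[OF r(2)])
  then have "?P \<le> ?F \<nu>" by simp
  moreover have "?F \<nu> \<le> ?P" by (rule press_ge[OF cont r(2)])
  ultimately have "\<nu> \<in> equilibrium_states \<phi> \<beta>"
    unfolding equilibrium_states_def using r(2) by simp
  then show ?thesis by blast
qed

lemma tangent:
  fixes a b c s \<beta> \<delta> :: real
  assumes d: "0 < \<delta>" and le: "\<And>x. \<beta> - \<delta> \<le> x \<Longrightarrow> x \<le> \<beta> + \<delta> \<Longrightarrow> c + x * s \<le> a * x + b"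
    and eq: "c + \<beta> * s = a * \<beta> + b"
  shows "s = a \<and> c = b"
proof -
  have 1: "c + (\<beta> + \<delta>) * s \<le> a * (\<beta> + \<delta>) + b" using le d by simp
  have 2: "c + (\<beta> - \<delta>) * s \<le> a * (\<beta> - \<delta>) + b" using le d by simp
  have "\<delta> * s \<le> \<delta> * a" using 1 eq by (simp add: algebra_simps)
  then have "s \<le> a" using d by simp
  moreover have "\<delta> * a \<le> \<delta> * s" using 2 eq by (simp add: algebra_simps)
  then have "a \<le> s" using d by simp
  ultimately have "s = a" by simp
  then show ?thesis using eq by simp
qed

lemma ES_affine:
  fixes \<phi> :: "('d::finite, 'a::finite) config \<Rightarrow> real"
  assumes cont: "continuous_map shift_topology euclideanreal \<phi>"
    and aff: "\<And>x. \<beta> - \<delta> \<le> x \<Longrightarrow> x \<le> \<beta> + \<delta> \<Longrightarrow> pressure \<phi> x = a * x + b" and d: "0 < \<delta>"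
  shows "equilibrium_states \<phi> \<beta> = {\<mu>\<in>invariant_measures. integral\<^sup>L \<mu> \<phi> = a \<and> ms_entropy \<mu> = b}"
proof (intro equalityI subsetI)
  fix \<mu> assume "\<mu> \<in> equilibrium_states \<phi> \<beta>"
  then have inv: "\<mu> \<in> invariant_measures" and eq: "ms_entropy \<mu> + \<beta> * integral\<^sup>L \<mu> \<phi> = pressure \<phi> \<beta>"
    by (auto simp: equilibrium_states_def)
  have "integral\<^sup>L \<mu> \<phi> = a \<and> ms_entropy \<mu> = b"
  proof (rule tangent[OF d])
    fix x assume x: "\<beta> - \<delta> \<le> x" "x \<le> \<beta> + \<delta>"
    show "ms_entropy \<mu> + x * integral\<^sup>L \<mu> \<phi> \<le> a * x + b"
      using press_ge[OF cont inv, of x] aff[OF x] by simp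
  next
    show "ms_entropy \<mu> + \<beta> * integral\<^sup>L \<mu> \<phi> = a * \<beta> + b" using eq aff[of \<beta>] d by simp
  qed
  then show "\<mu> \<in> {\<mu>\<in>invariant_measures. integral\<^sup>L \<mu> \<phi> = a \<and> ms_entropy \<mu> = b}" using inv by simp
next
  fix \<mu> assume "\<mu> \<in> {\<mu>\<in>invariant_measures. integral\<^sup>L \<mu> \<phi> = a \<and> ms_entropy \<mu> = b}"
  then show "\<mu> \<in> equilibrium_states \<phi> \<beta>"
    using aff[of \<beta>] d by (auto simp: equilibrium_states_def algebra_simps)
qed

lemma s_h_affine:
  fixes \<phi> :: "('d::finite, 'a::finite) config \<Rightarrow> real"
  assumes cont: "continuous_map shift_topology euclideanreal \<phi>"
    and aff: "\<And>x. \<beta>c \<le> x \<Longrightarrow> pressure \<phi> x = a * x + b"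
  shows "s_phi \<phi> = a \<and> h_phi \<phi> = b"
proof -
  obtain \<mu> where \<mu>: "\<mu> \<in> equilibrium_states \<phi> (\<beta>c + 1)" using ES_nonempty[OF cont] by blast
  have ES: "equilibrium_states \<phi> (\<beta>c + 1) = {\<mu>\<in>invariant_measures. integral\<^sup>L \<mu> \<phi> = a \<and> ms_entropy \<mu> = b}"
    by (rule ES_affine[OF cont _ zero_less_one]) (rule aff, simp)
  with \<mu> have inv: "\<mu> \<in> invariant_measures" and int: "integral\<^sup>L \<mu> \<phi> = a" and ent: "ms_entropy \<mu> = b"
    by auto
  have upper: "integral\<^sup>L \<nu> \<phi> \<le> a" if nu: "\<nu> \<in> invariant_measures" for \<nu>
  proof (rule ccontr)
    assume "\<not> integral\<^sup>L \<nu> \<phi> \<le> a"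
    then have pos: "0 < integral\<^sup>L \<nu> \<phi> - a" by simp
    define x where "x = max \<beta>c ((\<bar>b\<bar> + 1) / (integral\<^sup>L \<nu> \<phi> - a))"
    have "\<beta>c \<le> x" by (simp add: x_def)
    have "(\<bar>b\<bar> + 1) / (integral\<^sup>L \<nu> \<phi> - a) \<le> x" by (simp add: x_def)
    then have "\<bar>b\<bar> + 1 \<le> x * (integral\<^sup>L \<nu> \<phi> - a)" using pos by (simp add: divide_le_eq)
    moreover have "ms_entropy \<nu> + x * integral\<^sup>L \<nu> \<phi> \<le> a * x + b"
      using press_ge[OF cont nu, of x] aff[OF \<open>\<beta>c \<le> x\<close>] by simp
    moreover have "0 \<le> ms_entropy \<nu>" by (rule ms_entropy_nonneg[OF nu])
    ultimately show False by (simp add: algebra_simps)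
  qed
  have s: "s_phi \<phi> = a"
    unfolding s_phi_def
  proof (rule antisym)
    show "(SUP \<nu>\<in>invariant_measures. integral\<^sup>L \<nu> \<phi>) \<le> a"
      by (rule cSUP_least[OF inv_nonempty upper])
    have "bdd_above ((\<lambda>\<nu>. integral\<^sup>L \<nu> \<phi>) ` invariant_measures)"
      using upper by (intro bdd_aboveI2) 
    then show "a \<le> (SUP \<nu>\<in>invariant_measures. integral\<^sup>L \<nu> \<phi>)"
      using cSUP_upper[OF inv] int by metis
  qed
  have hupper: "ms_entropy \<eta> \<le> b" if eta: "\<eta> \<in> {\<eta>\<in>invariant_measures. integral\<^sup>L \<eta> \<phi> = s_phi \<phi>}" for \<eta>
  proof -
    have "ms_entropy \<eta> + \<beta>c * integral\<^sup>L \<eta> \<phi> \<le> a * \<beta>c + b"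
      using press_ge[OF cont, of \<eta> \<beta>c] aff[of \<beta>c] eta by simp
    then show ?thesis using eta s by (simp add: algebra_simps)
  qed
  have mem: "\<mu> \<in> {\<eta>\<in>invariant_measures. integral\<^sup>L \<eta> \<phi> = s_phi \<phi>}" using inv int s by simp
  have h: "h_phi \<phi> = b"
    unfolding h_phi_def
  proof (rule antisym)
    show "(SUP \<eta>\<in>{\<eta>\<in>invariant_measures. integral\<^sup>L \<eta> \<phi> = s_phi \<phi>}. ms_entropy \<eta>) \<le> b"
      by (rule cSUP_least) (use mem hupper in auto)
    have "bdd_above (ms_entropy ` {\<eta>\<in>invariant_measures. integral\<^sup>L \<eta> \<phi> = s_phi \<phi>})"
      using hupper by (intro bdd_aboveI2)
    then have "ms_entropy \<mu> \<le> (SUP \<eta>\<in>{\<eta>\<in>invariant_measures. integral\<^sup>L \<eta> \<phi> = s_phi \<phi>}. ms_entropy \<eta>)"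
      by (rule cSUP_upper[OF mem])
    then show "b \<le> (SUP \<eta>\<in>{\<eta>\<in>invariant_measures. integral\<^sup>L \<eta> \<phi> = s_phi \<phi>}. ms_entropy \<eta>)"
      using ent by simp
  qed
  show ?thesis using s h by simp
qed

lemma dir1:
  fixes \<phi> :: "('d::finite, 'a::finite) config \<Rightarrow> real"
  assumes cont: "continuous_map shift_topology euclideanreal \<phi>"
    and fr: "freezing_phase_transition \<phi> \<beta>c"
  shows "\<exists>a b. (\<forall>x\<ge>\<beta>c. pressure \<phi> x = a * x + b) \<and>
           (\<forall>I. is_interval I \<and> {\<beta>c..} \<subset> I \<longrightarrow> \<not> affine_on (pressure \<phi>) I)"
proof -
  have fr': "(\<forall>\<beta> \<beta>'. \<beta> > \<beta>c \<and> \<beta>' > \<beta>c \<longrightarrow> equilibrium_states \<phi> \<beta> = equilibrium_states \<phi> \<beta>') \<and>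
     (\<forall>\<beta> \<beta>'. \<beta> < \<beta>c \<and> \<beta>c < \<beta>' \<longrightarrow> equilibrium_states \<phi> \<beta> \<noteq> equilibrium_states \<phi> \<beta>')"
    using fr unfolding freezing_phase_transition_def .
  have c1: "equilibrium_states \<phi> \<beta> = equilibrium_states \<phi> \<beta>'" if h: "\<beta> > \<beta>c" "\<beta>' > \<beta>c" for \<beta> \<beta>'
    using conjunct1[OF fr', rule_format, OF conjI[OF h]] .
  have c2: "equilibrium_states \<phi> \<beta> \<noteq> equilibrium_states \<phi> \<beta>'" if h: "\<beta> < \<beta>c" "\<beta>c < \<beta>'" for \<beta> \<beta>'
    using conjunct2[OF fr', rule_format, OF conjI[OF h]] .
  obtain B where B: "\<And>x. \<bar>\<phi> x\<bar> \<le> B" using phi_bounded[OF cont] by auto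
  obtain \<mu> where \<mu>: "\<mu> \<in> equilibrium_states \<phi> (\<beta>c + 1)" using ES_nonempty[OF cont] by blast
  then have inv: "\<mu> \<in> invariant_measures" by (simp add: equilibrium_states_def)
  define a where "a = integral\<^sup>L \<mu> \<phi>"
  define b where "b = ms_entropy \<mu>"
  have aB: "\<bar>a\<bar> \<le> B" unfolding a_def by (rule int_bound[OF cont B inv])
  have gt: "pressure \<phi> \<beta> = a * \<beta> + b" if "\<beta> > \<beta>c" for \<beta>
  proof -
    have "\<mu> \<in> equilibrium_states \<phi> \<beta>" using \<mu> c1[of "\<beta>c + 1" \<beta>] that by simp
    then show ?thesis by (simp add: equilibrium_states_def a_def b_def algebra_simps)
  qed
  have at: "pressure \<phi> \<beta>c = a * \<beta>c + b"
  proof (rule antisym)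
    show "a * \<beta>c + b \<le> pressure \<phi> \<beta>c"
      using press_ge[OF cont inv, of \<beta>c] by (simp add: a_def b_def algebra_simps)
    show "pressure \<phi> \<beta>c \<le> a * \<beta>c + b"
    proof (rule ccontr)
      assume "\<not> pressure \<phi> \<beta>c \<le> a * \<beta>c + b"
      then have dpos: "0 < pressure \<phi> \<beta>c - (a * \<beta>c + b)" by simp
      define d where "d = pressure \<phi> \<beta>c - (a * \<beta>c + b)"
      define \<tau> where "\<tau> = d / (2 * (B + 1))"
      define \<beta> where "\<beta> = \<beta>c + \<tau>"
      have B0: "0 \<le> B" using B[of undefined] by simp
      have t0: "0 < \<tau>" using dpos B0 unfolding d_def \<tau>_def by simp
      then have "\<beta> > \<beta>c" by (simp add: \<beta>_def)
      have "pressure \<phi> \<beta>c \<le> pressure \<phi> \<beta> + B * \<bar>\<beta>c - \<beta>\<bar>" by (rule press_lip[OF cont B])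
      also have "\<bar>\<beta>c - \<beta>\<bar> = \<tau>" using t0 by (simp add: \<beta>_def)
      also have "pressure \<phi> \<beta> = a * \<beta>c + a * \<tau> + b"
        using gt[OF \<open>\<beta> > \<beta>c\<close>] by (simp add: \<beta>_def algebra_simps)
      finally have 1: "d \<le> (a + B) * \<tau>" unfolding d_def by (simp add: algebra_simps)
      have "(a + B) * \<tau> \<le> (2 * B) * \<tau>"
        using aB t0 by (intro mult_right_mono) auto
      also have "(2 * B) * \<tau> < d"
        using B0 dpos unfolding d_def \<tau>_def by (simp add: field_simps)
      finally have "(a + B) * \<tau> < d" .
      with 1 have False by simp
      then show False .
    qed
  qed
  have aff: "\<forall>x\<ge>\<beta>c. pressure \<phi> x = a * x + b"
    using gt at by (metis order_le_less)
  have notl: "\<not> affine_on (pressure \<phi>) I" if I: "is_interval I" "{\<beta>c..} \<subset> I" for I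
  proof
    assume "affine_on (pressure \<phi>) I"
    then obtain a' b' where ab': "\<And>x. x \<in> I \<Longrightarrow> pressure \<phi> x = a' * x + b'"
      unfolding affine_on_def by blast
    obtain \<beta>0 where "\<beta>0 \<in> I - {\<beta>c..}" using psubset_imp_ex_mem[OF I(2)] by blast
    then have b0: "\<beta>0 \<in> I" "\<beta>0 < \<beta>c" by auto
    have sub: "x \<in> I" if "\<beta>0 \<le> x" for x
    proof (cases "\<beta>c \<le> x")
      case True then show ?thesis using I(2) by auto
    next
      case False
      have "\<beta>c \<in> I" using I(2) by auto
      have "\<beta>0 \<le> x \<and> x \<le> \<beta>c" using that False by simp
      then show ?thesis using I(1) b0(1) \<open>\<beta>c \<in> I\<close> unfolding is_interval_1 by blast
    qed
    define \<beta>1 where "\<beta>1 = (\<beta>0 + \<beta>c) / 2"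
    define \<delta>1 where "\<delta>1 = (\<beta>c - \<beta>0) / 2"
    have d1: "0 < \<delta>1" using b0 by (simp add: \<delta>1_def)
    have E1: "equilibrium_states \<phi> \<beta>1 = {\<mu>\<in>invariant_measures. integral\<^sup>L \<mu> \<phi> = a' \<and> ms_entropy \<mu> = b'}"
    proof (rule ES_affine[OF cont _ d1])
      fix x assume "\<beta>1 - \<delta>1 \<le> x" "x \<le> \<beta>1 + \<delta>1"
      moreover have "\<beta>1 - \<delta>1 = \<beta>0" unfolding \<beta>1_def \<delta>1_def by (simp add: field_simps)
      ultimately have "\<beta>0 \<le> x" by simp
      then show "pressure \<phi> x = a' * x + b'" by (intro ab' sub)
    qed
    have E2: "equilibrium_states \<phi> (\<beta>c + 1) = {\<mu>\<in>invariant_measures. integral\<^sup>L \<mu> \<phi> = a' \<and> ms_entropy \<mu> = b'}"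
      by (rule ES_affine[OF cont _ zero_less_one]) (intro ab' sub, use b0 in simp)
    have "\<beta>1 < \<beta>c" using b0 by (simp add: \<beta>1_def)
    then show False using c2[of \<beta>1 "\<beta>c + 1"] E1 E2 by simp
  qed
  show ?thesis using aff notl by blast
qed

lemma dir2:
  fixes \<phi> :: "('d::finite, 'a::finite) config \<Rightarrow> real"
  assumes cont: "continuous_map shift_topology euclideanreal \<phi>"
    and aff: "\<And>x. \<beta>c \<le> x \<Longrightarrow> pressure \<phi> x = a * x + b"
    and notl: "\<And>I. is_interval I \<Longrightarrow> {\<beta>c..} \<subset> I \<Longrightarrow> \<not> affine_on (pressure \<phi>) I"
  shows "freezing_phase_transition \<phi> \<beta>c"
proof -
  have ES: "equilibrium_states \<phi> \<beta> = {\<mu>\<in>invariant_measures. integral\<^sup>L \<mu> \<phi> = a \<and> ms_entropy \<mu> = b}"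
    if "\<beta> > \<beta>c" for \<beta>
    by (rule ES_affine[where \<delta>="\<beta> - \<beta>c", OF cont]) (use that aff in auto)
  have c2: "equilibrium_states \<phi> \<beta> \<noteq> equilibrium_states \<phi> \<beta>'" if b: "\<beta> < \<beta>c" "\<beta>c < \<beta>'" for \<beta> \<beta>'
  proof
    assume eq: "equilibrium_states \<phi> \<beta> = equilibrium_states \<phi> \<beta>'"
    obtain \<mu> where \<mu>: "\<mu> \<in> equilibrium_states \<phi> \<beta>'" using ES_nonempty[OF cont] by blast
    then have inv: "\<mu> \<in> invariant_measures" and int: "integral\<^sup>L \<mu> \<phi> = a" and ent: "ms_entropy \<mu> = b"
      using ES[OF b(2)] by auto
    have "\<mu> \<in> equilibrium_states \<phi> \<beta>" using \<mu> eq by simp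
    then have Pb: "pressure \<phi> \<beta> = a * \<beta> + b"
      using int ent by (simp add: equilibrium_states_def algebra_simps)
    have Pb': "pressure \<phi> \<beta>' = a * \<beta>' + b" using aff b by simp
    have all: "pressure \<phi> x = a * x + b" if x: "\<beta> \<le> x" for x
    proof (cases "\<beta>c \<le> x")
      case True then show ?thesis by (rule aff)
    next
      case False
      then have x2: "x \<le> \<beta>'" using b by simp
      show ?thesis
      proof (rule antisym)
        show "a * x + b \<le> pressure \<phi> x"
          using press_ge[OF cont inv, of x] int ent by (simp add: algebra_simps)
        show "pressure \<phi> x \<le> a * x + b"
        proof (rule press_le)
          fix \<nu> :: "('d, 'a) config measure" assume nu: "\<nu> \<in> invariant_measures"
          define t where "t = (\<beta>' - x) / (\<beta>' - \<beta>)"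
          have t0: "0 \<le> t" "t \<le> 1" using x x2 b by (auto simp: t_def divide_le_eq)
          have ne: "\<beta>' - \<beta> \<noteq> 0" using b by simp
          have h: "t * (\<beta>' - \<beta>) = \<beta>' - x" using ne by (simp add: t_def)
          have "x = \<beta>' - t * (\<beta>' - \<beta>)" using h by simp
          also have "\<dots> = t * \<beta> + (1 - t) * \<beta>'" by (simp add: algebra_simps)
          finally have xt: "x = t * \<beta> + (1 - t) * \<beta>'" .
          have e1: "ms_entropy \<nu> + \<beta> * integral\<^sup>L \<nu> \<phi> \<le> a * \<beta> + b"
            using press_ge[OF cont nu, of \<beta>] Pb by simp
          have e2: "ms_entropy \<nu> + \<beta>' * integral\<^sup>L \<nu> \<phi> \<le> a * \<beta>' + b"
            using press_ge[OF cont nu, of \<beta>'] Pb' by simp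
          have "t * (ms_entropy \<nu> + \<beta> * integral\<^sup>L \<nu> \<phi>) + (1 - t) * (ms_entropy \<nu> + \<beta>' * integral\<^sup>L \<nu> \<phi>)
              \<le> t * (a * \<beta> + b) + (1 - t) * (a * \<beta>' + b)"
            using add_mono[OF mult_left_mono[OF e1 t0(1)] mult_left_mono[OF e2, of "1 - t"]] t0 by simp
          then show "ms_entropy \<nu> + x * integral\<^sup>L \<nu> \<phi> \<le> a * x + b"
            unfolding xt by (simp add: algebra_simps)
        qed
      qed
    qed
    have "affine_on (pressure \<phi>) {\<beta>..}" unfolding affine_on_def using all by auto
    moreover have "{\<beta>c..} \<subset> {\<beta>..}" using b by auto
    ultimately show False using notl[OF is_interval_ci] by blast
  qed
  show ?thesis unfolding freezing_phase_transition_def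
    using ES c2 by auto
qed

theorem proposition2p3:
  fixes \<phi> :: "('d::finite, 'a::finite) config \<Rightarrow> real" and \<beta>c :: real
  assumes "continuous_map shift_topology euclideanreal \<phi>"
  shows "(freezing_phase_transition \<phi> \<beta>c \<longleftrightarrow>
           affine_on (pressure \<phi>) {\<beta>c..} \<and>
           (\<forall>I. is_interval I \<and> {\<beta>c..} \<subset> I \<longrightarrow> \<not> affine_on (pressure \<phi>) I)) \<and>
         (freezing_phase_transition \<phi> \<beta>c \<longrightarrow>
           (\<forall>\<beta>\<ge>\<beta>c. pressure \<phi> \<beta> = s_phi \<phi> * \<beta> + h_phi \<phi>))"
proof -
  have A: "freezing_phase_transition \<phi> \<beta>c \<longrightarrow> affine_on (pressure \<phi>) {\<beta>c..} \<and>
           (\<forall>I. is_interval I \<and> {\<beta>c..} \<subset> I \<longrightarrow> \<not> affine_on (pressure \<phi>) I)"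
  proof
    assume fr: "freezing_phase_transition \<phi> \<beta>c"
    obtain a b where ab: "\<forall>x\<ge>\<beta>c. pressure \<phi> x = a * x + b"
      and nl: "\<forall>I. is_interval I \<and> {\<beta>c..} \<subset> I \<longrightarrow> \<not> affine_on (pressure \<phi>) I"
      using dir1[OF assms fr] by blast
    have "affine_on (pressure \<phi>) {\<beta>c..}" unfolding affine_on_def using ab by auto
    then show "affine_on (pressure \<phi>) {\<beta>c..} \<and> (\<forall>I. is_interval I \<and> {\<beta>c..} \<subset> I \<longrightarrow> \<not> affine_on (pressure \<phi>) I)"
      using nl by (intro conjI)
  qed
  have B: "affine_on (pressure \<phi>) {\<beta>c..} \<and> (\<forall>I. is_interval I \<and> {\<beta>c..} \<subset> I \<longrightarrow> \<not> affine_on (pressure \<phi>) I)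
      \<longrightarrow> freezing_phase_transition \<phi> \<beta>c"
  proof
    assume "affine_on (pressure \<phi>) {\<beta>c..} \<and> (\<forall>I. is_interval I \<and> {\<beta>c..} \<subset> I \<longrightarrow> \<not> affine_on (pressure \<phi>) I)"
    then obtain a b where ab: "\<And>x. \<beta>c \<le> x \<Longrightarrow> pressure \<phi> x = a * x + b"
      and nl: "\<And>I. is_interval I \<Longrightarrow> {\<beta>c..} \<subset> I \<Longrightarrow> \<not> affine_on (pressure \<phi>) I"
      unfolding affine_on_def by auto
    show "freezing_phase_transition \<phi> \<beta>c" by (rule dir2[OF assms ab nl])
  qed
  have C: "freezing_phase_transition \<phi> \<beta>c \<longrightarrow> (\<forall>\<beta>\<ge>\<beta>c. pressure \<phi> \<beta> = s_phi \<phi> * \<beta> + h_phi \<phi>)"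
  proof
    assume fr: "freezing_phase_transition \<phi> \<beta>c"
    obtain a b where ab: "\<forall>x\<ge>\<beta>c. pressure \<phi> x = a * x + b"
      using dir1[OF assms fr] by blast
    have sh: "s_phi \<phi> = a \<and> h_phi \<phi> = b"
      by (rule s_h_affine[OF assms]) (use ab in auto)
    show "\<forall>\<beta>\<ge>\<beta>c. pressure \<phi> \<beta> = s_phi \<phi> * \<beta> + h_phi \<phi>"
      using ab sh by simp
  qed
  show ?thesis using A B C by blast
qed

end
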